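(* Let $\Lambda=K\mathcal{Q}/I$ be a finite-dimensional algebra over a field $K$ as in the context, let $A\geqslant1$, let $\tilde{\Lambda}=\tilde{\Lambda}_A$ be its stretched algebra, and let $\varepsilon=\sum_{v\in\mathcal{Q}_0}v\in\tilde{\Lambda}$. Then $\Lambda\cong\varepsilon\tilde{\Lambda}\varepsilon$ as $K$-algebras.
   Context: Conventions: $\mathcal{Q}$ is a finite quiver with vertex set $\mathcal{Q}_0$; $\mathfrak{o}(\alpha)$, $\mathfrak{t}(\alpha)$ denote start and end of an arrow; paths are written left to right. An element $x\in K\mathcal{Q}$ is uniform if $x=vx=xv'$ for vertices $v,v'$. $\Lambda=K\mathcal{Q}/I$ is finite-dimensional with $I$ an admissible ideal generated by a minimal set $\{g^2_1,\dots,g^2_m\}$ of uniform elements. Stretched algebra: for $A\geqslant1$, the quiver $\tilde{\mathcal{Q}}_A$ has all vertices of $\mathcal{Q}$ plus, for each arrow $\alpha$ of $\mathcal{Q}$, new vertices $w_1,\dots,w_{A-1}$; each arrow $\alpha$ is replaced by arrows $\alpha_1,\dots,\alpha_A$ with $\mathfrak{o}(\alpha_1)=\mathfrak{o}(\alpha)$, $\mathfrak{t}(\alpha_j)=\mathfrak{o}(\alpha_{j+1})=w_j$ ($1\le j\le A-1$), $\mathfrak{t}(\alpha_A)=\mathfrak{t}(\alpha)$, and the only arrows incident with $w_j$ are $\alpha_j,\alpha_{j+1}$. $\theta^*:K\mathcal{Q}\to K\tilde{\mathcal{Q}}_A$ is the algebra homomorphism fixing vertices and sending $\alpha\mapsto\alpha_1\cdots\alpha_A$;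 $\tilde{I}_A$ is the ideal generated by $\theta^*(g^2_1),\dots,\theta^*(g^2_m)$; $\tilde{\Lambda}_A=K\tilde{\mathcal{Q}}_A/\tilde{I}_A$. *)

theory Defs
  imports "HOL-Algebra.QuotRing"
begin

text \<open>A path is a pair (v, as): a start vertex v
  and a list of arrows, read left to right; (v, []) is the trivial path at v.\<close>

definition valid_path ::
  "'v set \<Rightarrow> 'a set \<Rightarrow> ('a \<Rightarrow> 'v) \<Rightarrow> ('a \<Rightarrow> 'v) \<Rightarrow> 'v \<times> 'a list \<Rightarrow> bool" where
  "valid_path V E src tgt p \<longleftrightarrow>
     fst p \<in> V \<and> set (snd p) \<subseteq> E \<and>
     (snd p \<noteq> [] \<longrightarrow> src (hd (snd p)) = fst p) \<and>
     (\<forall>i. Suc i < length (snd p) \<longrightarrow> tgt (snd p ! i) = src (snd p ! Suc i))"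

definition path_end :: "('a \<Rightarrow> 'v) \<Rightarrow> 'v \<times> 'a list \<Rightarrow> 'v" where
  "path_end tgt p = (if snd p = [] then fst p else tgt (last (snd p)))"

definition path_cat :: "'v \<times> 'a list \<Rightarrow> 'v \<times> 'a list \<Rightarrow> 'v \<times> 'a list" where
  "path_cat p q = (fst p, snd p @ snd q)"

text \<open>Elements of the path algebra KQ: finitely supported K-valued functions on paths
  (the coefficient of each path), supported on valid paths.\<close>

definition pa_mult ::
  "('a \<Rightarrow> 'v) \<Rightarrow> ('v \<times> 'a list \<Rightarrow> 'k::field) \<Rightarrow> ('v \<times> 'a list \<Rightarrow> 'k) \<Rightarrow> ('v \<times> 'a list \<Rightarrow> 'k)" where
  "pa_mult tgt f g = (\<lambda>r. \<Sum>(p, q) \<in> {p. f p \<noteq> 0} \<times> {q. g q \<noteq> 0}.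
       if path_end tgt p = fst q \<and> path_cat p q = r then f p * g q else 0)"

definition path_algebra ::
  "'v set \<Rightarrow> 'a set \<Rightarrow> ('a \<Rightarrow> 'v) \<Rightarrow> ('a \<Rightarrow> 'v) \<Rightarrow> ('v \<times> 'a list \<Rightarrow> 'k::field) ring" where
  "path_algebra V E src tgt =
     \<lparr> carrier = {f. finite {p. f p \<noteq> 0} \<and> (\<forall>p. f p \<noteq> 0 \<longrightarrow> valid_path V E src tgt p)},
       monoid.mult = pa_mult tgt,
       one = (\<lambda>p. if snd p = [] \<and> fst p \<in> V then 1 else 0),
       zero = (\<lambda>p. 0),
       add = (\<lambda>f g p. f p + g p) \<rparr>"

definition path_elem :: "'v \<times> 'a list \<Rightarrow> ('v \<times> 'a list \<Rightarrow> 'k::field)" where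
  "path_elem p = (\<lambda>q. if q = p then 1 else 0)"

definition arrow_ideal_pow ::
  "'v set \<Rightarrow> 'a set \<Rightarrow> ('a \<Rightarrow> 'v) \<Rightarrow> ('a \<Rightarrow> 'v) \<Rightarrow> nat \<Rightarrow> ('v \<times> 'a list \<Rightarrow> 'k::field) set" where
  "arrow_ideal_pow V E src tgt m =
     genideal (path_algebra V E src tgt)
       (path_elem ` {p. valid_path V E src tgt p \<and> length (snd p) = m})"

definition admissible_ideal ::
  "'v set \<Rightarrow> 'a set \<Rightarrow> ('a \<Rightarrow> 'v) \<Rightarrow> ('a \<Rightarrow> 'v) \<Rightarrow> ('v \<times> 'a list \<Rightarrow> 'k::field) set \<Rightarrow> bool" where
  "admissible_ideal V E src tgt I \<longleftrightarrow>
     ideal I (path_algebra V E src tgt) \<and>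
     (\<exists>m\<ge>2. arrow_ideal_pow V E src tgt m \<subseteq> I) \<and> I \<subseteq> arrow_ideal_pow V E src tgt 2"

definition uniform_elem ::
  "'v set \<Rightarrow> 'a set \<Rightarrow> ('a \<Rightarrow> 'v) \<Rightarrow> ('a \<Rightarrow> 'v) \<Rightarrow> ('v \<times> 'a list \<Rightarrow> 'k::field) \<Rightarrow> bool" where
  "uniform_elem V E src tgt x \<longleftrightarrow>
     (\<exists>v\<in>V. \<exists>v'\<in>V.
        x = pa_mult tgt (path_elem (v, [])) x \<and> x = pa_mult tgt x (path_elem (v', [])))"

text \<open>Vertices: Inl v for v in Q_0, and Inr (alpha, j) = w_j (1 \<le> j \<le> A-1) for each arrow alpha.
  Arrows: (alpha, j) = alpha_j for 1 \<le> j \<le> A.\<close>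

definition st_vertices :: "nat \<Rightarrow> 'v set \<Rightarrow> 'a set \<Rightarrow> ('v + 'a \<times> nat) set" where
  "st_vertices A V E = Inl ` V \<union> {Inr (\<alpha>, j) | \<alpha> j. \<alpha> \<in> E \<and> 1 \<le> j \<and> j \<le> A - 1}"

definition st_arrows :: "nat \<Rightarrow> 'a set \<Rightarrow> ('a \<times> nat) set" where
  "st_arrows A E = {(\<alpha>, j) | \<alpha> j. \<alpha> \<in> E \<and> 1 \<le> j \<and> j \<le> A}"

definition st_src :: "nat \<Rightarrow> ('a \<Rightarrow> 'v) \<Rightarrow> 'a \<times> nat \<Rightarrow> 'v + 'a \<times> nat" where
  "st_src A src b = (if snd b = 1 then Inl (src (fst b)) else Inr (fst b, snd b - 1))"

definition st_tgt :: "nat \<Rightarrow> ('a \<Rightarrow> 'v) \<Rightarrow> 'a \<times> nat \<Rightarrow> 'v + 'a \<times> nat" where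
  "st_tgt A tgt b = (if snd b = A then Inl (tgt (fst b)) else Inr b)"

definition theta_path :: "nat \<Rightarrow> 'v \<times> 'a list \<Rightarrow> ('v + 'a \<times> nat) \<times> ('a \<times> nat) list" where
  "theta_path A p = (Inl (fst p), concat (map (\<lambda>\<alpha>. map (\<lambda>j. (\<alpha>, j)) [1..<A+1]) (snd p)))"

definition theta :: "nat \<Rightarrow> ('v \<times> 'a list \<Rightarrow> 'k::field) \<Rightarrow> (('v + 'a \<times> nat) \<times> ('a \<times> nat) list \<Rightarrow> 'k)" where
  "theta A x = (\<lambda>q. \<Sum>p \<in> {p. x p \<noteq> 0 \<and> theta_path A p = q}. x p)"

definition stretched_path_algebra ::
  "nat \<Rightarrow> 'v set \<Rightarrow> 'a set \<Rightarrow> ('a \<Rightarrow> 'v) \<Rightarrow> ('a \<Rightarrow> 'v)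
     \<Rightarrow> (('v + 'a \<times> nat) \<times> ('a \<times> nat) list \<Rightarrow> 'k::field) ring" where
  "stretched_path_algebra A V E src tgt =
     path_algebra (st_vertices A V E) (st_arrows A E) (st_src A src) (st_tgt A tgt)"

definition stretched_ideal ::
  "nat \<Rightarrow> 'v set \<Rightarrow> 'a set \<Rightarrow> ('a \<Rightarrow> 'v) \<Rightarrow> ('a \<Rightarrow> 'v) \<Rightarrow> ('v \<times> 'a list \<Rightarrow> 'k::field) set
     \<Rightarrow> (('v + 'a \<times> nat) \<times> ('a \<times> nat) list \<Rightarrow> 'k) set" where
  "stretched_ideal A V E src tgt G = genideal (stretched_path_algebra A V E src tgt) (theta A ` G)"

definition corner_ring :: "('b, 'c) ring_scheme \<Rightarrow> 'b \<Rightarrow> 'b ring" where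
  "corner_ring S e =
     \<lparr> carrier = {e \<otimes>\<^bsub>S\<^esub> y \<otimes>\<^bsub>S\<^esub> e | y. y \<in> carrier S},
       monoid.mult = monoid.mult S, one = e, zero = zero S, add = add S \<rparr>"

definition quot_smult ::
  "('p \<Rightarrow> 'k::field, 'c) ring_scheme \<Rightarrow> ('p \<Rightarrow> 'k) set \<Rightarrow> 'k \<Rightarrow> ('p \<Rightarrow> 'k) set \<Rightarrow> ('p \<Rightarrow> 'k) set" where
  "quot_smult R I c X = I +>\<^bsub>R\<^esub> (\<lambda>p. c * (SOME x. x \<in> X) p)"

end

theory Submission
  imports Defs
begin


fun vp :: "'v set \<Rightarrow> 'a set \<Rightarrow> ('a \<Rightarrow> 'v) \<Rightarrow> ('a \<Rightarrow> 'v) \<Rightarrow> 'v \<Rightarrow> 'a list \<Rightarrow> bool" where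
  "vp V E s t v [] = (v \<in> V)"
| "vp V E s t v (a # as) = (v \<in> V \<and> a \<in> E \<and> s a = v \<and> vp V E s t (t a) as)"

lemma path_end_Nil[simp]: "path_end t (v, []) = v"
  by (simp add: path_end_def)

lemma path_end_Cons[simp]: "path_end t (v, a # as) = path_end t (t a, as)"
  by (simp add: path_end_def)

lemma path_end_append: "path_end t (v, xs @ ys) = path_end t (path_end t (v, xs), ys)"
  by (induction xs arbitrary: v) auto

lemma vp_V: "vp V E s t v xs \<Longrightarrow> v \<in> V"
  by (cases xs) auto

lemma vp_append: "vp V E s t v (xs @ ys) = (vp V E s t v xs \<and> vp V E s t (path_end t (v, xs)) ys)"
  by (induction xs arbitrary: v) (auto dest: vp_V)

lemma chain_Cons:
  "(\<forall>i. Suc i < length (a # as) \<longrightarrow> t ((a # as) ! i) = s ((a # as) ! Suc i)) \<longleftrightarrow>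
   ((as \<noteq> [] \<longrightarrow> s (hd as) = t a) \<and> (\<forall>i. Suc i < length as \<longrightarrow> t (as ! i) = s (as ! Suc i)))"
  apply (cases as)
   apply simp
  apply (auto simp: nth_Cons split: nat.splits)
  done

lemma valid_path_vp:
  assumes "\<forall>\<alpha>\<in>E. t \<alpha> \<in> V"
  shows "valid_path V E s t (v, xs) = vp V E s t v xs"
  using assms
proof (induction xs arbitrary: v)
  case Nil
  then show ?case by (simp add: valid_path_def)
next
  case (Cons a as)
  have "valid_path V E s t (t a, as) = vp V E s t (t a) as" using Cons by blast
  moreover have "valid_path V E s t (v, a # as) = (v \<in> V \<and> a \<in> E \<and> s a = v \<and> valid_path V E s t (t a, as))"
    unfolding valid_path_def snd_conv fst_conv chain_Cons using Cons.prems by auto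
  ultimately show ?case by simp
qed



lemma swap4a:
  "(\<Sum>s\<in>C. \<Sum>c\<in>Z. \<Sum>a\<in>X. \<Sum>b\<in>Y. F s c a b) = (\<Sum>a\<in>X. \<Sum>b\<in>Y. \<Sum>c\<in>Z. \<Sum>s\<in>C. F s c a b)"
proof -
  have "(\<Sum>s\<in>C. \<Sum>c\<in>Z. \<Sum>a\<in>X. \<Sum>b\<in>Y. F s c a b) = (\<Sum>c\<in>Z. \<Sum>s\<in>C. \<Sum>a\<in>X. \<Sum>b\<in>Y. F s c a b)"
    by (rule sum.swap)
  also have "\<dots> = (\<Sum>c\<in>Z. \<Sum>a\<in>X. \<Sum>b\<in>Y. \<Sum>s\<in>C. F s c a b)"
    by (intro sum.cong refl) (simp add: sum.swap[of _ C X] sum.swap[of _ C Y])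
  also have "\<dots> = (\<Sum>a\<in>X. \<Sum>c\<in>Z. \<Sum>b\<in>Y. \<Sum>s\<in>C. F s c a b)"
    by (rule sum.swap)
  also have "\<dots> = (\<Sum>a\<in>X. \<Sum>b\<in>Y. \<Sum>c\<in>Z. \<Sum>s\<in>C. F s c a b)"
    by (intro sum.cong refl) (rule sum.swap)
  finally show ?thesis .
qed

lemma swap4b:
  "(\<Sum>a\<in>X. \<Sum>t\<in>D. \<Sum>b\<in>Y. \<Sum>c\<in>Z. F a t b c) = (\<Sum>a\<in>X. \<Sum>b\<in>Y. \<Sum>c\<in>Z. \<Sum>t\<in>D. F a t b c)"
proof (intro sum.cong refl)
  fix a
  have "(\<Sum>t\<in>D. \<Sum>b\<in>Y. \<Sum>c\<in>Z. F a t b c) = (\<Sum>b\<in>Y. \<Sum>t\<in>D. \<Sum>c\<in>Z. F a t b c)"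
    by (rule sum.swap)
  also have "\<dots> = (\<Sum>b\<in>Y. \<Sum>c\<in>Z. \<Sum>t\<in>D. F a t b c)"
    by (intro sum.cong refl) (rule sum.swap)
  finally show "(\<Sum>t\<in>D. \<Sum>b\<in>Y. \<Sum>c\<in>Z. F a t b c) = (\<Sum>b\<in>Y. \<Sum>c\<in>Z. \<Sum>t\<in>D. F a t b c)" .
qed

definition "cnd t p q r \<longleftrightarrow> path_end t p = fst q \<and> path_cat p q = r"

lemma pa_mult_PQ:
  assumes "finite P" "finite Q" "{p. f p \<noteq> 0} \<subseteq> P" "{q. g q \<noteq> 0} \<subseteq> Q"
  shows "pa_mult t f g r = (\<Sum>p\<in>P. \<Sum>q\<in>Q. if cnd t p q r then f p * g q else 0)"
proof -
  let ?F = "\<lambda>(p,q). if cnd t p q r then f p * g q else 0"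
  have fin: "finite {p. f p \<noteq> 0}" "finite {q. g q \<noteq> 0}"
    using assms finite_subset by blast+
  have "pa_mult t f g r = sum ?F ({p. f p \<noteq> 0} \<times> {q. g q \<noteq> 0})"
    unfolding pa_mult_def cnd_def by simp
  also have "\<dots> = sum ?F (P \<times> Q)"
    by (rule sum.mono_neutral_left) (use assms in \<open>auto split: if_splits\<close>)
  also have "\<dots> = (\<Sum>p\<in>P. \<Sum>q\<in>Q. if cnd t p q r then f p * g q else 0)"
    by (simp add: sum.cartesian_product)
  finally show ?thesis .
qed

lemma pa_mult_T:
  assumes "finite {p. f p \<noteq> 0}" "finite {q. g q \<noteq> 0}" "finite T"
    "\<And>p q. f p \<noteq> 0 \<Longrightarrow> g q \<noteq> 0 \<Longrightarrow> cnd t p q r \<Longrightarrow> (p, q) \<in> T"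
  shows "pa_mult t f g r = (\<Sum>(p,q)\<in>T. if cnd t p q r then f p * g q else 0)"
proof -
  let ?F = "\<lambda>(p,q). if cnd t p q r then f p * g q else 0"
  have "pa_mult t f g r = sum ?F ({p. f p \<noteq> 0} \<times> {q. g q \<noteq> 0})"
    unfolding pa_mult_def cnd_def by simp
  also have "\<dots> = sum ?F ({p. f p \<noteq> 0} \<times> {q. g q \<noteq> 0} \<union> T)"
    by (rule sum.mono_neutral_left) (use assms in \<open>auto split: if_splits\<close>)
  also have "\<dots> = sum ?F T"
    by (rule sum.mono_neutral_right) (use assms in \<open>auto split: if_splits\<close>)
  finally show ?thesis .
qed

lemma pa_mult_supp:
  assumes "pa_mult t f g r \<noteq> 0"
  shows "\<exists>p q. f p \<noteq> 0 \<and> g q \<noteq> 0 \<and> cnd t p q r"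
proof -
  from assms obtain pq where "pq \<in> {p. f p \<noteq> 0} \<times> {q. g q \<noteq> 0}"
    "(\<lambda>(p, q). if path_end t p = fst q \<and> path_cat p q = r then f p * g q else 0) pq \<noteq> 0"
    unfolding pa_mult_def by (meson sum.not_neutral_contains_not_neutral)
  then show ?thesis unfolding cnd_def by (cases pq) (auto split: if_splits)
qed

lemma cnd_cat: "cnd t p q s \<longleftrightarrow> path_end t p = fst q \<and> s = path_cat p q"
  unfolding cnd_def by auto

lemma sum_collapse:
  assumes "finite C" "x \<in> C"
  shows "(\<Sum>s\<in>C. if P \<and> s = x \<and> Q s then F else 0) = (if P \<and> Q x then F else 0)"
proof -
  have "(\<Sum>s\<in>C. if P \<and> s = x \<and> Q s then F else 0) = (\<Sum>s\<in>C. if s = x then (if P \<and> Q x then F else 0) else 0)"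
    by (intro sum.cong) auto
  also have "\<dots> = (if P \<and> Q x then F else 0)"
    using assms by (simp add: sum.delta)
  finally show ?thesis .
qed

lemma supp_mult_sub:
  "{r. pa_mult t f g r \<noteq> 0} \<subseteq> (\<lambda>(p,q). path_cat p q) ` ({p. f p \<noteq> 0} \<times> {q. g q \<noteq> 0})"
proof
  fix r assume "r \<in> {r. pa_mult t f g r \<noteq> 0}"
  then obtain p q where "f p \<noteq> 0" "g q \<noteq> 0" "cnd t p q r" using pa_mult_supp by blast
  then show "r \<in> (\<lambda>(p,q). path_cat p q) ` ({p. f p \<noteq> 0} \<times> {q. g q \<noteq> 0})"
    by (intro image_eqI[of _ _ "(p, q)"]) (auto simp: cnd_def)
qed

lemma supp_mult_fin:
  "finite {p. f p \<noteq> 0} \<Longrightarrow> finite {q. g q \<noteq> 0} \<Longrightarrow> finite {r. pa_mult t f g r \<noteq> 0}"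
  by (rule finite_subset[OF supp_mult_sub]) auto

lemma path_end_cat:
  "path_end t p = fst q \<Longrightarrow> path_end t (path_cat p q) = path_end t q"
  unfolding path_cat_def
  by (cases p; cases q) (simp add: path_end_append)

lemma cond_assoc: "(path_end t p1 = fst p2 \<and> cnd t (path_cat p1 p2) p3 r) = (path_end t p2 = fst p3 \<and> cnd t p1 (path_cat p2 p3) r)"
  by (cases p1; cases p2; cases p3) (auto simp: cnd_def path_cat_def path_end_append)

lemma pa_mult_assoc:
  fixes f g h :: "'v \<times> 'a list \<Rightarrow> 'k::field"
  assumes f1: "finite {p. f p \<noteq> 0}" and f2: "finite {p. g p \<noteq> 0}" and f3: "finite {p. h p \<noteq> 0}"
  shows "pa_mult t (pa_mult t f g) h = pa_mult t f (pa_mult t g h)"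
proof
  fix r
  define S1 where "S1 = {p. f p \<noteq> 0}"
  define S2 where "S2 = {p. g p \<noteq> 0}"
  define S3 where "S3 = {p. h p \<noteq> 0}"
  define C where "C = (\<lambda>(p,q). path_cat p q) ` (S1 \<times> S2)"
  define D where "D = (\<lambda>(p,q). path_cat p q) ` (S2 \<times> S3)"
  have fin: "finite S1" "finite S2" "finite S3" "finite C" "finite D"
    using assms by (auto simp: S1_def S2_def S3_def C_def D_def)
  have sC: "{r. pa_mult t f g r \<noteq> 0} \<subseteq> C" unfolding C_def S1_def S2_def by (rule supp_mult_sub)
  have sD: "{r. pa_mult t g h r \<noteq> 0} \<subseteq> D" unfolding D_def S3_def S2_def by (rule supp_mult_sub)
  have "pa_mult t (pa_mult t f g) h r =
     (\<Sum>s\<in>C. \<Sum>p3\<in>S3. if cnd t s p3 r then pa_mult t f g s * h p3 else 0)"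
    by (rule pa_mult_PQ) (use fin sC in \<open>auto simp: S3_def\<close>)
  also have "\<dots> = (\<Sum>s\<in>C. \<Sum>p3\<in>S3. \<Sum>p1\<in>S1. \<Sum>p2\<in>S2.
       if cnd t s p3 r \<and> cnd t p1 p2 s then f p1 * g p2 * h p3 else 0)"
  proof (intro sum.cong refl)
    fix s p3
    have "pa_mult t f g s = (\<Sum>p1\<in>S1. \<Sum>p2\<in>S2. if cnd t p1 p2 s then f p1 * g p2 else 0)"
      by (rule pa_mult_PQ) (use fin in \<open>auto simp: S1_def S2_def\<close>)
    then show "(if cnd t s p3 r then pa_mult t f g s * h p3 else 0) = (\<Sum>p1\<in>S1. \<Sum>p2\<in>S2.
       if cnd t s p3 r \<and> cnd t p1 p2 s then f p1 * g p2 * h p3 else 0)"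
      by (cases "cnd t s p3 r") (auto simp: sum_distrib_right intro!: sum.cong)
  qed
  also have "\<dots> = (\<Sum>p1\<in>S1. \<Sum>p2\<in>S2. \<Sum>p3\<in>S3. \<Sum>s\<in>C.
       if cnd t s p3 r \<and> cnd t p1 p2 s then f p1 * g p2 * h p3 else 0)"
    by (rule swap4a)
  also have "\<dots> = (\<Sum>p1\<in>S1. \<Sum>p2\<in>S2. \<Sum>p3\<in>S3.
       if path_end t p1 = fst p2 \<and> cnd t (path_cat p1 p2) p3 r then f p1 * g p2 * h p3 else 0)"
  proof (intro sum.cong refl)
    fix p1 p2 p3 assume "p1 \<in> S1" "p2 \<in> S2"
    then have "path_cat p1 p2 \<in> C" unfolding C_def by auto
    then show "(\<Sum>s\<in>C. if cnd t s p3 r \<and> cnd t p1 p2 s then f p1 * g p2 * h p3 else 0) =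
       (if path_end t p1 = fst p2 \<and> cnd t (path_cat p1 p2) p3 r then f p1 * g p2 * h p3 else 0)"
      unfolding sum_collapse[OF fin(4) \<open>path_cat p1 p2 \<in> C\<close>, of "path_end t p1 = fst p2" "\<lambda>s. cnd t s p3 r", symmetric]
      by (intro sum.cong refl) (auto simp: cnd_def)
  qed
  also have "\<dots> = (\<Sum>p1\<in>S1. \<Sum>p2\<in>S2. \<Sum>p3\<in>S3.
       if path_end t p2 = fst p3 \<and> cnd t p1 (path_cat p2 p3) r then f p1 * (g p2 * h p3) else 0)"
  proof -
    have eqc: "\<And>p1 p2 p3. (if path_end t p1 = fst p2 \<and> cnd t (path_cat p1 p2) p3 r then f p1 * g p2 * h p3 else 0) = (if path_end t p2 = fst p3 \<and> cnd t p1 (path_cat p2 p3) r then f p1 * (g p2 * h p3) else 0)"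
    proof -
      fix p1 p2 p3
      have c: "(path_end t p1 = fst p2 \<and> cnd t (path_cat p1 p2) p3 r) = (path_end t p2 = fst p3 \<and> cnd t p1 (path_cat p2 p3) r)"
        by (rule cond_assoc)
      show "?thesis p1 p2 p3" unfolding c by (simp add: mult.assoc)
    qed
    show ?thesis by (intro sum.cong refl eqc)
  qed
  also have "\<dots> = (\<Sum>p1\<in>S1. \<Sum>p2\<in>S2. \<Sum>p3\<in>S3. \<Sum>t'\<in>D.
       if cnd t p1 t' r \<and> cnd t p2 p3 t' then f p1 * (g p2 * h p3) else 0)"
  proof (intro sum.cong refl)
    fix p1 p2 p3 assume "p2 \<in> S2" "p3 \<in> S3"
    then have "path_cat p2 p3 \<in> D" unfolding D_def by auto
    then show "(if path_end t p2 = fst p3 \<and> cnd t p1 (path_cat p2 p3) r then f p1 * (g p2 * h p3) else 0) =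
      (\<Sum>s\<in>D. if cnd t p1 s r \<and> cnd t p2 p3 s then f p1 * (g p2 * h p3) else 0)"
      unfolding sum_collapse[OF fin(5) \<open>path_cat p2 p3 \<in> D\<close>, of "path_end t p2 = fst p3" "\<lambda>s. cnd t p1 s r", symmetric]
      by (intro sum.cong refl) (auto simp: cnd_def)
  qed
  also have "\<dots> = (\<Sum>p1\<in>S1. \<Sum>t'\<in>D. \<Sum>p2\<in>S2. \<Sum>p3\<in>S3.
       if cnd t p1 t' r \<and> cnd t p2 p3 t' then f p1 * (g p2 * h p3) else 0)"
    by (rule swap4b[symmetric])
  also have "\<dots> = (\<Sum>p1\<in>S1. \<Sum>t'\<in>D. if cnd t p1 t' r then f p1 * pa_mult t g h t' else 0)"
  proof (intro sum.cong refl)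
    fix p1 t'
    have "pa_mult t g h t' = (\<Sum>p2\<in>S2. \<Sum>p3\<in>S3. if cnd t p2 p3 t' then g p2 * h p3 else 0)"
      by (rule pa_mult_PQ) (use fin in \<open>auto simp: S3_def S2_def\<close>)
    then show "(\<Sum>p2\<in>S2. \<Sum>p3\<in>S3. if cnd t p1 t' r \<and> cnd t p2 p3 t' then f p1 * (g p2 * h p3) else 0)
       = (if cnd t p1 t' r then f p1 * pa_mult t g h t' else 0)"
      by (cases "cnd t p1 t' r") (auto simp: sum_distrib_left intro!: sum.cong)
  qed
  also have "\<dots> = pa_mult t f (pa_mult t g h) r"
    by (rule pa_mult_PQ[symmetric]) (use fin sD in \<open>auto simp: S1_def\<close>)
  finally show "pa_mult t (pa_mult t f g) h r = pa_mult t f (pa_mult t g h) r" .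
qed



lemma PA_simps[simp]:
  "x \<otimes>\<^bsub>path_algebra V E s t\<^esub> y = pa_mult t x y"
  "x \<oplus>\<^bsub>path_algebra V E s t\<^esub> y = (\<lambda>p. x p + y p)"
  "\<zero>\<^bsub>path_algebra V E s t\<^esub> = (\<lambda>p. 0)"
  "\<one>\<^bsub>path_algebra V E s t\<^esub> = (\<lambda>p. if snd p = [] \<and> fst p \<in> V then 1 else 0)"
  by (simp_all add: path_algebra_def)

lemma vp_end: "vp V E s t v xs \<Longrightarrow> (\<forall>\<alpha>\<in>E. t \<alpha> \<in> V) \<Longrightarrow> path_end t (v, xs) \<in> V"
  by (induction xs arbitrary: v) auto

lemma if_add_distrib: "(if c then a + b else 0) = (if c then a else 0) + (if c then b else (0::'k::field))"
  by simp

locale quiv =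
  fixes V :: "'v set" and E :: "'a set" and src tgt :: "'a \<Rightarrow> 'v"
  assumes finV: "finite V" and arr: "\<forall>\<alpha>\<in>E. src \<alpha> \<in> V \<and> tgt \<alpha> \<in> V"
begin

lemma carrier_PA:
  "f \<in> carrier (path_algebra V E src tgt) \<longleftrightarrow>
     finite {p. f p \<noteq> 0} \<and> (\<forall>p. f p \<noteq> 0 \<longrightarrow> vp V E src tgt (fst p) (snd p))"
proof -
  have "valid_path V E src tgt p = vp V E src tgt (fst p) (snd p)" for p
    using valid_path_vp[of E tgt V src "fst p" "snd p"] arr by simp
  then show ?thesis by (simp add: path_algebra_def)
qed

lemma one_fin0: "finite {p::'v \<times> 'b list. snd p = [] \<and> fst p \<in> V}"
proof -
  have "{p::'v \<times> 'b list. snd p = [] \<and> fst p \<in> V} = (\<lambda>v. (v, [])) ` V"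
    by (auto simp: image_iff)
  then show ?thesis using finV by simp
qed

lemma one_fin: "finite {p. (if snd p = [] \<and> fst p \<in> V then 1 else (0::'k::field)) \<noteq> 0}"
  using one_fin0 by simp

lemma PA_ring: "ring (path_algebra V E src tgt :: ('v \<times> 'a list \<Rightarrow> 'k::field) ring)"
proof (rule ringI)
  let ?R = "path_algebra V E src tgt :: ('v \<times> 'a list \<Rightarrow> 'k::field) ring"
  have tV: "\<forall>\<alpha>\<in>E. tgt \<alpha> \<in> V" using arr by blast
  show "abelian_group ?R"
  proof (rule abelian_groupI)
    fix x y assume x: "x \<in> carrier ?R" and y: "y \<in> carrier ?R"
    have "{p. x p + y p \<noteq> 0} \<subseteq> {p. x p \<noteq> 0} \<union> {p. y p \<noteq> 0}" by auto
    then show "x \<oplus>\<^bsub>?R\<^esub> y \<in> carrier ?R"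
      using x y unfolding carrier_PA by (auto intro: finite_subset)
  next
    show "\<zero>\<^bsub>?R\<^esub> \<in> carrier ?R" by (simp add: carrier_PA)
  next
    fix x y z :: "'v \<times> 'a list \<Rightarrow> 'k"
    show "(x \<oplus>\<^bsub>?R\<^esub> y) \<oplus>\<^bsub>?R\<^esub> z = x \<oplus>\<^bsub>?R\<^esub> (y \<oplus>\<^bsub>?R\<^esub> z)" by (simp add: add.assoc)
  next
    fix x y :: "'v \<times> 'a list \<Rightarrow> 'k"
    show "x \<oplus>\<^bsub>?R\<^esub> y = y \<oplus>\<^bsub>?R\<^esub> x" by (simp add: add.commute)
  next
    fix x :: "'v \<times> 'a list \<Rightarrow> 'k"
    show "\<zero>\<^bsub>?R\<^esub> \<oplus>\<^bsub>?R\<^esub> x = x" by simp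
  next
    fix x assume x: "x \<in> carrier ?R"
    show "\<exists>y\<in>carrier ?R. y \<oplus>\<^bsub>?R\<^esub> x = \<zero>\<^bsub>?R\<^esub>"
      by (rule bexI[of _ "\<lambda>p. - x p"]) (use x in \<open>auto simp: carrier_PA\<close>)
  qed
  show "monoid ?R"
  proof (rule monoidI)
    fix x y assume x: "x \<in> carrier ?R" and y: "y \<in> carrier ?R"
    show "x \<otimes>\<^bsub>?R\<^esub> y \<in> carrier ?R"
      unfolding carrier_PA PA_simps
    proof
      show "finite {p. pa_mult tgt x y p \<noteq> 0}"
        using x y by (intro supp_mult_fin) (auto simp: carrier_PA)
      show "\<forall>p. pa_mult tgt x y p \<noteq> 0 \<longrightarrow> vp V E src tgt (fst p) (snd p)"
      proof (intro allI impI)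
        fix r assume "pa_mult tgt x y r \<noteq> 0"
        then obtain p q where "x p \<noteq> 0" "y q \<noteq> 0" "cnd tgt p q r" using pa_mult_supp by blast
        then show "vp V E src tgt (fst r) (snd r)"
          using x y unfolding carrier_PA cnd_def path_cat_def
          by (auto simp: vp_append)
      qed
    qed
  next
    show "\<one>\<^bsub>?R\<^esub> \<in> carrier ?R" using one_fin0 by (auto simp: carrier_PA)
  next
    fix x y z assume x: "x \<in> carrier ?R" and y: "y \<in> carrier ?R" and z: "z \<in> carrier ?R"
    show "x \<otimes>\<^bsub>?R\<^esub> y \<otimes>\<^bsub>?R\<^esub> z = x \<otimes>\<^bsub>?R\<^esub> (y \<otimes>\<^bsub>?R\<^esub> z)"
      using x y z by (simp add: pa_mult_assoc carrier_PA)
  next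
    fix x assume x: "x \<in> carrier ?R"
    show "\<one>\<^bsub>?R\<^esub> \<otimes>\<^bsub>?R\<^esub> x = x"
    proof
      fix r :: "'v \<times> 'a list"
      have "pa_mult tgt (\<lambda>p. if snd p = [] \<and> fst p \<in> V then 1 else 0) x r
          = (\<Sum>(p,q)\<in>{((fst r, []), r)}. if cnd tgt p q r then (if snd p = [] \<and> fst p \<in> V then 1 else 0) * x q else 0)"
        by (rule pa_mult_T) (use x one_fin in \<open>auto simp: carrier_PA cnd_def path_cat_def split: if_splits\<close>)
      also have "\<dots> = x r"
        using x by (cases r) (auto simp: carrier_PA cnd_def path_cat_def dest: vp_V)
      finally show "(\<one>\<^bsub>?R\<^esub> \<otimes>\<^bsub>?R\<^esub> x) r = x r" by simp
    qed
  next
    fix x assume x: "x \<in> carrier ?R"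
    show "x \<otimes>\<^bsub>?R\<^esub> \<one>\<^bsub>?R\<^esub> = x"
    proof
      fix r :: "'v \<times> 'a list"
      have "pa_mult tgt x (\<lambda>p. if snd p = [] \<and> fst p \<in> V then 1 else 0) r
          = (\<Sum>(p,q)\<in>{(r, (path_end tgt r, []))}. if cnd tgt p q r then x p * (if snd q = [] \<and> fst q \<in> V then 1 else 0) else 0)"
        by (rule pa_mult_T) (use x one_fin in \<open>auto simp: carrier_PA cnd_def path_cat_def split: if_splits\<close>)
      also have "\<dots> = x r"
        using x vp_end[OF _ tV] by (cases r) (auto simp: carrier_PA cnd_def path_cat_def, blast)
      finally show "(x \<otimes>\<^bsub>?R\<^esub> \<one>\<^bsub>?R\<^esub>) r = x r" by simp
    qed
  qed
next
  let ?R = "path_algebra V E src tgt :: ('v \<times> 'a list \<Rightarrow> 'k::field) ring"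
  fix x y z assume x: "x \<in> carrier ?R" and y: "y \<in> carrier ?R" and z: "z \<in> carrier ?R"
  let ?P = "{p. x p \<noteq> 0} \<union> {p. y p \<noteq> 0}"
  have fin: "finite ?P" "finite {p. z p \<noteq> 0}" using x y z by (auto simp: carrier_PA)
  show "(x \<oplus>\<^bsub>?R\<^esub> y) \<otimes>\<^bsub>?R\<^esub> z = x \<otimes>\<^bsub>?R\<^esub> z \<oplus>\<^bsub>?R\<^esub> y \<otimes>\<^bsub>?R\<^esub> z"
  proof (simp, rule ext)
    fix r
    have e1: "pa_mult tgt (\<lambda>p. x p + y p) z r = (\<Sum>p\<in>?P. \<Sum>q\<in>{p. z p \<noteq> 0}. if cnd tgt p q r then (x p + y p) * z q else 0)"
      by (rule pa_mult_PQ) (use fin in auto)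
    have e2: "pa_mult tgt x z r = (\<Sum>p\<in>?P. \<Sum>q\<in>{p. z p \<noteq> 0}. if cnd tgt p q r then x p * z q else 0)"
      by (rule pa_mult_PQ) (use fin in auto)
    have e3: "pa_mult tgt y z r = (\<Sum>p\<in>?P. \<Sum>q\<in>{p. z p \<noteq> 0}. if cnd tgt p q r then y p * z q else 0)"
      by (rule pa_mult_PQ) (use fin in auto)
    show "pa_mult tgt (\<lambda>p. x p + y p) z r = pa_mult tgt x z r + pa_mult tgt y z r"
      unfolding e1 e2 e3 by (simp add: sum.distrib[symmetric]) (intro sum.cong refl, simp add: distrib_right)
  qed
  let ?Q = "{p. y p \<noteq> 0} \<union> {p. z p \<noteq> 0}"
  have fin2: "finite ?Q" "finite {p. x p \<noteq> 0}" using x y z by (auto simp: carrier_PA)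
  show "z \<otimes>\<^bsub>?R\<^esub> (x \<oplus>\<^bsub>?R\<^esub> y) = z \<otimes>\<^bsub>?R\<^esub> x \<oplus>\<^bsub>?R\<^esub> z \<otimes>\<^bsub>?R\<^esub> y"
  proof (simp, rule ext)
    fix r
    let ?P = "{p. x p \<noteq> 0} \<union> {p. y p \<noteq> 0}"
    have e1: "pa_mult tgt z (\<lambda>p. x p + y p) r = (\<Sum>p\<in>{p. z p \<noteq> 0}. \<Sum>q\<in>?P. if cnd tgt p q r then z p * (x q + y q) else 0)"
      by (rule pa_mult_PQ) (use fin in auto)
    have e2: "pa_mult tgt z x r = (\<Sum>p\<in>{p. z p \<noteq> 0}. \<Sum>q\<in>?P. if cnd tgt p q r then z p * x q else 0)"
      by (rule pa_mult_PQ) (use fin in auto)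
    have e3: "pa_mult tgt z y r = (\<Sum>p\<in>{p. z p \<noteq> 0}. \<Sum>q\<in>?P. if cnd tgt p q r then z p * y q else 0)"
      by (rule pa_mult_PQ) (use fin in auto)
    show "pa_mult tgt z (\<lambda>p. x p + y p) r = pa_mult tgt z x r + pa_mult tgt z y r"
      unfolding e1 e2 e3 by (simp add: sum.distrib[symmetric]) (intro sum.cong refl, simp add: distrib_left)
  qed
qed

end


definition blk :: "nat \<Rightarrow> 'a \<Rightarrow> ('a \<times> nat) list" where
  "blk A \<alpha> = map (\<lambda>j. (\<alpha>, j)) [1..<A+1]"

lemma theta_path_blk: "theta_path A p = (Inl (fst p), concat (map (blk A) (snd p)))"
  unfolding theta_path_def blk_def[abs_def] by (simp del: upt_Suc)

lemma blk_len[simp]: "length (blk A a) = A" by (simp add: blk_def)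

lemma blk_Cons: "1 \<le> A \<Longrightarrow> blk A a = (a, 1) # map (\<lambda>j. (a, j)) [2..<A+1]"
  by (simp add: blk_def upt_conv_Cons numeral_2_eq_2 del: upt_Suc)

lemma blk_inj: "1 \<le> A \<Longrightarrow> blk A a = blk A b \<Longrightarrow> a = b"
  by (simp add: blk_Cons)

lemma concat_blk_inj:
  assumes "1 \<le> A"
  shows "concat (map (blk A) xs) = concat (map (blk A) ys) \<Longrightarrow> xs = ys"
proof (induction xs arbitrary: ys)
  case Nil
  then show ?case using assms by (cases ys) (auto simp: blk_Cons)
next
  case (Cons a xs)
  then obtain b ys' where ys: "ys = b # ys'" using assms by (cases ys) (auto simp: blk_Cons)
  with Cons.prems have "blk A a @ concat (map (blk A) xs) = blk A b @ concat (map (blk A) ys')" by simp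
  then have h: "blk A a = blk A b" "concat (map (blk A) xs) = concat (map (blk A) ys')"
    by (metis append_eq_append_conv blk_len)+
  have "a = b" by (rule blk_inj[OF assms h(1)])
  moreover have "xs = ys'" by (rule Cons.IH[OF h(2)])
  ultimately show ?case using ys by simp
qed

lemma theta_path_inj: "1 \<le> A \<Longrightarrow> inj (theta_path A)"
proof (rule injI)
  fix p q assume A: "1 \<le> A" and "theta_path A p = theta_path A q"
  then have "fst p = fst q" "concat (map (blk A) (snd p)) = concat (map (blk A) (snd q))"
    by (simp_all add: theta_path_blk)
  then show "p = q" using concat_blk_inj[OF A] by (metis prod.collapse)
qed

lemma theta_path_cat: "theta_path A (path_cat p q) = path_cat (theta_path A p) (theta_path A q)"
  by (simp add: theta_path_blk path_cat_def)

lemma theta_at: "1 \<le> A \<Longrightarrow> theta A x (theta_path A p) = x p"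
proof -
  assume A: "1 \<le> A"
  have "{p'. x p' \<noteq> 0 \<and> theta_path A p' = theta_path A p} = (if x p \<noteq> 0 then {p} else {})"
    using theta_path_inj[OF A] by (auto dest: injD)
  then show ?thesis by (simp add: theta_def)
qed

lemma theta_out: "q \<notin> range (theta_path A) \<Longrightarrow> theta A x q = 0"
proof -
  assume "q \<notin> range (theta_path A)"
  then have e: "{p'. x p' \<noteq> 0 \<and> theta_path A p' = q} = {}" by auto
  show ?thesis unfolding theta_def e by simp
qed

lemma last_blk: "1 \<le> A \<Longrightarrow> last (blk A a) = (a, A)"
  by (simp add: blk_def last_map del: upt_Suc)

lemma st_end_blk:
  assumes "1 \<le> A"
  shows "path_end (st_tgt A tgt) (w, blk A a) = Inl (tgt a)"
  using assms by (auto simp: path_end_def last_blk st_tgt_def blk_Cons)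

lemma st_end_theta:
  assumes "1 \<le> A"
  shows "path_end (st_tgt A tgt) (Inl v, concat (map (blk A) xs)) = Inl (path_end tgt (v, xs))"
proof (induction xs arbitrary: v)
  case Nil then show ?case by simp
next
  case (Cons a xs)
  have "path_end (st_tgt A tgt) (Inl v, concat (map (blk A) (a # xs)))
      = path_end (st_tgt A tgt) (path_end (st_tgt A tgt) (Inl v, blk A a), concat (map (blk A) xs))"
    by (simp add: path_end_append)
  also have "\<dots> = path_end (st_tgt A tgt) (Inl (tgt a), concat (map (blk A) xs))"
    by (simp only: st_end_blk[OF assms])
  finally show ?case using Cons by simp
qed

lemma st_end_theta_path:
  "1 \<le> A \<Longrightarrow> path_end (st_tgt A tgt) (theta_path A p) = Inl (path_end tgt p)"
  by (cases p) (simp add: theta_path_blk st_end_theta)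

lemma SV_Inl[simp]: "Inl u \<in> st_vertices A V E \<longleftrightarrow> u \<in> V"
  by (auto simp: st_vertices_def)

lemma SV_Inr[simp]: "Inr (a, j) \<in> st_vertices A V E \<longleftrightarrow> a \<in> E \<and> 1 \<le> j \<and> j \<le> A - 1"
  by (auto simp: st_vertices_def)

lemma SE_iff[simp]: "(a, j) \<in> st_arrows A E \<longleftrightarrow> a \<in> E \<and> 1 \<le> j \<and> j \<le> A"
  by (auto simp: st_arrows_def)

locale stretch = quiv V E src tgt
  for V :: "'v set" and E :: "'a set" and src tgt :: "'a \<Rightarrow> 'v" +
  fixes A :: nat
  assumes finE: "finite E" and A1: "1 \<le> A"
begin

abbreviation "SV \<equiv> st_vertices A V E"
abbreviation "SE \<equiv> st_arrows A E"
abbreviation "Ss \<equiv> st_src A src"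
abbreviation "St \<equiv> st_tgt A tgt"

lemma st_quiv: "quiv SV SE Ss St"
proof
  have "SV = Inl ` V \<union> Inr ` (E \<times> {1..A-1})" by (auto simp: st_vertices_def)
  then show "finite SV" using finV finE by simp
  show "\<forall>\<alpha>\<in>SE. Ss \<alpha> \<in> SV \<and> St \<alpha> \<in> SV"
    using arr A1 by (auto simp: st_arrows_def st_src_def st_tgt_def)
qed

sublocale S: quiv SV SE Ss St by (rule st_quiv)

lemma vp_blk_aux:
  "a \<in> E \<Longrightarrow> 1 \<le> j \<Longrightarrow> j \<le> A \<Longrightarrow> vp SV SE Ss St (Ss (a, j)) (map (\<lambda>i. (a, i)) [j..<A+1])"
proof (induction "A - j" arbitrary: j)
  case 0
  then have "j = A" by simp
  then show ?case using 0 arr by (auto simp: st_tgt_def st_src_def)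
next
  case (Suc k)
  then have "j < A" by simp
  have "[j..<A+1] = j # [Suc j..<A+1]" using Suc.prems by (simp add: upt_conv_Cons)
  moreover have "vp SV SE Ss St (Ss (a, Suc j)) (map (\<lambda>i. (a, i)) [Suc j..<A+1])"
    using Suc \<open>j < A\<close> by simp
  moreover have "Ss (a, j) \<in> SV" using Suc.prems arr by (auto simp: st_src_def)
  ultimately show ?case using Suc.prems \<open>j < A\<close> by (simp add: st_tgt_def st_src_def)
qed

lemma vp_blk: "a \<in> E \<Longrightarrow> vp SV SE Ss St (Inl (src a)) (blk A a)"
  using vp_blk_aux[of a 1] A1 by (simp add: blk_def st_src_def)

lemma vp_theta: "vp V E src tgt v xs \<Longrightarrow> vp SV SE Ss St (Inl v) (concat (map (blk A) xs))"
proof (induction xs arbitrary: v)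
  case Nil then show ?case by simp
next
  case (Cons a xs)
  then have "vp SV SE Ss St (Inl v) (blk A a)" using vp_blk by auto
  moreover have "vp SV SE Ss St (Inl (tgt a)) (concat (map (blk A) xs))" using Cons by simp
  ultimately show ?case by (simp add: vp_append st_end_blk[OF A1])
qed

lemma chain:
  "vp SV SE Ss St (Inr (a, j)) ys \<Longrightarrow> 1 \<le> j \<Longrightarrow> j < A \<Longrightarrow> path_end St (Inr (a, j), ys) = Inl w \<Longrightarrow>
   \<exists>rest. ys = map (\<lambda>i. (a, i)) [Suc j..<A+1] @ rest \<and> vp SV SE Ss St (Inl (tgt a)) rest
      \<and> path_end St (Inl (tgt a), rest) = Inl w"
proof (induction ys arbitrary: j)
  case Nil then show ?case by simp
next
  case (Cons b ys)
  obtain a' j' where b: "b = (a', j')" by (cases b)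
  from Cons.prems(1) have "Ss b = Inr (a, j)" "b \<in> SE" "vp SV SE Ss St (St b) ys" by auto
  then have b': "b = (a, Suc j)" using Cons.prems(2) b by (auto simp: st_src_def split: if_splits)
  show ?case
  proof (cases "Suc j = A")
    case True
    then have "[Suc j..<A+1] = [A]" by simp
    then show ?thesis using Cons.prems b' True \<open>vp SV SE Ss St (St b) ys\<close>
      by (auto simp: st_tgt_def)
  next
    case False
    then have "St b = Inr (a, Suc j)" using b' by (simp add: st_tgt_def)
    then obtain rest where r: "ys = map (\<lambda>i. (a, i)) [Suc (Suc j)..<A+1] @ rest"
      "vp SV SE Ss St (Inl (tgt a)) rest" "path_end St (Inl (tgt a), rest) = Inl w"
      using Cons.IH[of "Suc j"] Cons.prems False \<open>vp SV SE Ss St (St b) ys\<close> b' by auto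
    have u: "[Suc j..<A+1] = Suc j # [Suc (Suc j)..<A+1]" using Cons.prems False by (simp add: upt_conv_Cons del: upt_Suc)
    have "b # ys = map (\<lambda>i. (a, i)) [Suc j..<A+1] @ rest"
      unfolding u using r(1) b' by simp
    then show ?thesis using r(2,3) by blast
  qed
qed

lemma unstretch:
  "vp SV SE Ss St (Inl u) ys \<Longrightarrow> path_end St (Inl u, ys) = Inl w \<Longrightarrow>
   \<exists>xs. vp V E src tgt u xs \<and> ys = concat (map (blk A) xs)"
proof (induction "length ys" arbitrary: u ys rule: less_induct)
  case less
  show ?case
  proof (cases ys)
    case Nil then show ?thesis using less.prems by (intro exI[of _ "[]"]) auto
  next
    case (Cons b ys')
    obtain a j where b: "b = (a, j)" by (cases b)
    from less.prems(1) Cons have h: "Ss b = Inl u" "b \<in> SE" "vp SV SE Ss St (St b) ys'" "u \<in> V" by auto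
    then have j: "j = 1" "src a = u" "a \<in> E" using b by (auto simp: st_src_def split: if_splits)
    show ?thesis
    proof (cases "A = 1")
      case True
      then have "St b = Inl (tgt a)" using b j by (simp add: st_tgt_def)
      moreover have "path_end St (Inl (tgt a), ys') = Inl w" using less.prems(2) Cons \<open>St b = Inl (tgt a)\<close> by simp
      ultimately obtain xs where "vp V E src tgt (tgt a) xs" "ys' = concat (map (blk A) xs)"
        using less.hyps[of ys' "tgt a"] Cons h by auto
      then show ?thesis using Cons b j h True
        by (intro exI[of _ "a # xs"]) (simp add: blk_def)
    next
      case False
      then have "St b = Inr (a, 1)" using b j by (simp add: st_tgt_def)
      then obtain rest where r: "ys' = map (\<lambda>i. (a, i)) [2..<A+1] @ rest"
        "vp SV SE Ss St (Inl (tgt a)) rest" "path_end St (Inl (tgt a), rest) = Inl w"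
        using chain[of a 1 ys' w] h A1 False less.prems(2) Cons by (auto simp: numeral_2_eq_2)
      then obtain xs where "vp V E src tgt (tgt a) xs" "rest = concat (map (blk A) xs)"
        using less.hyps[of rest "tgt a"] Cons by auto
      then show ?thesis using Cons b j h r A1
        by (intro exI[of _ "a # xs"]) (simp add: blk_Cons numeral_2_eq_2)
    qed
  qed
qed

end


lemma stretched_def': "stretched_path_algebra A V E src tgt = path_algebra (st_vertices A V E) (st_arrows A E) (st_src A src) (st_tgt A tgt)"
  by (simp add: stretched_path_algebra_def)

lemma concat_blk_Nil: "1 \<le> A \<Longrightarrow> concat (map (blk A) xs) = [] \<longleftrightarrow> xs = []"
  by (cases xs) (auto simp: blk_Cons)

lemma fst_theta_path[simp]: "fst (theta_path A p) = Inl (fst p)"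
  by (simp add: theta_path_blk)

lemma snd_theta_path: "snd (theta_path A p) = concat (map (blk A) (snd p))"
  by (simp add: theta_path_blk)

context stretch
begin

lemma th_at[simp]: "theta A x (theta_path A p) = x p"
  by (rule theta_at[OF A1])

lemma th_path_eq[simp]: "theta_path A p = theta_path A q \<longleftrightarrow> p = q"
  using theta_path_inj[OF A1] by (auto dest: injD)

lemma blk_ne[simp]: "blk A a \<noteq> []"
  using A1 by (simp add: blk_Cons)

lemma range_thetaE:
  assumes "q \<in> range (theta_path A)"
  obtains p where "q = theta_path A p"
  using assms by blast

lemma th_add: "theta A (\<lambda>p. x p + y p) = (\<lambda>q. theta A x q + theta A y q)"
proof
  fix q show "theta A (\<lambda>p. x p + y p) q = theta A x q + theta A y q"
    by (cases "q \<in> range (theta_path A)") (auto simp: th_at theta_out)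
qed

lemma th_smult: "theta A (\<lambda>p. c * x p) = (\<lambda>q. c * theta A x q)"
proof
  fix q show "theta A (\<lambda>p. c * x p) q = c * theta A x q"
    by (cases "q \<in> range (theta_path A)") (auto simp: th_at theta_out)
qed

lemma th_neg: "theta A (\<lambda>p. - x p) = (\<lambda>q. - theta A x q)"
proof
  fix q show "theta A (\<lambda>p. - x p) q = - theta A x q"
    by (cases "q \<in> range (theta_path A)") (auto simp: th_at theta_out)
qed

lemma th_zero: "theta A (\<lambda>p. 0) = (\<lambda>q. 0)"
proof
  fix q show "theta A (\<lambda>p. 0) q = 0"
    by (cases "q \<in> range (theta_path A)") (auto simp: th_at theta_out)
qed

lemma th_supp: "{q. theta A x q \<noteq> 0} \<subseteq> theta_path A ` {p. x p \<noteq> 0}"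
proof
  fix q assume "q \<in> {q. theta A x q \<noteq> 0}"
  then have "q \<in> range (theta_path A)" using theta_out[of q A x] by auto
  then obtain p where "q = theta_path A p" by blast
  then show "q \<in> theta_path A ` {p. x p \<noteq> 0}" using \<open>q \<in> {q. theta A x q \<noteq> 0}\<close>
    by (auto simp: th_at)
qed

lemma th_carrier:
  assumes "x \<in> carrier (path_algebra V E src tgt)"
  shows "theta A x \<in> carrier (path_algebra SV SE Ss St)"
  unfolding S.carrier_PA
proof
  show "finite {q. theta A x q \<noteq> 0}"
    using assms by (auto simp: carrier_PA intro: finite_subset[OF th_supp])
  show "\<forall>q. theta A x q \<noteq> 0 \<longrightarrow> vp SV SE Ss St (fst q) (snd q)"
  proof (intro allI impI)
    fix q assume "theta A x q \<noteq> 0"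
    then obtain p where p: "q = theta_path A p" "x p \<noteq> 0" using th_supp by blast
    then have "vp V E src tgt (fst p) (snd p)" using assms by (auto simp: carrier_PA)
    then show "vp SV SE Ss St (fst q) (snd q)" using p vp_theta by (simp add: snd_theta_path)
  qed
qed

lemma cnd_theta:
  "cnd St (theta_path A p) (theta_path A q) r \<longleftrightarrow>
     path_end tgt p = fst q \<and> theta_path A (path_cat p q) = r"
  by (simp add: cnd_def st_end_theta_path[OF A1] theta_path_cat)

lemma th_mult:
  fixes x y :: "'v \<times> 'a list \<Rightarrow> 'k::field"
  assumes fx: "finite {p. x p \<noteq> 0}" and fy: "finite {p. y p \<noteq> 0}"
  shows "theta A (pa_mult tgt x y) = pa_mult St (theta A x) (theta A y)"
proof
  fix r
  define Sx where "Sx = {p. x p \<noteq> 0}"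
  define Sy where "Sy = {p. y p \<noteq> 0}"
  have inj: "inj_on (theta_path A) X" for X using theta_path_inj[OF A1] by (meson inj_on_subset subset_UNIV)
  have rhs: "pa_mult St (theta A x) (theta A y) r =
     (\<Sum>p\<in>Sx. \<Sum>q\<in>Sy. if path_end tgt p = fst q \<and> theta_path A (path_cat p q) = r then x p * y q else 0)"
  proof -
    have "pa_mult St (theta A x) (theta A y) r =
       (\<Sum>p'\<in>theta_path A ` Sx. \<Sum>q'\<in>theta_path A ` Sy. if cnd St p' q' r then theta A x p' * theta A y q' else 0)"
      by (rule pa_mult_PQ) (use fx fy th_supp in \<open>auto simp: Sx_def Sy_def\<close>)
    also have "\<dots> = (\<Sum>p\<in>Sx. \<Sum>q\<in>Sy. if cnd St (theta_path A p) (theta_path A q) r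
         then theta A x (theta_path A p) * theta A y (theta_path A q) else 0)"
      by (simp add: sum.reindex[OF inj])
    also have "\<dots> = (\<Sum>p\<in>Sx. \<Sum>q\<in>Sy. if path_end tgt p = fst q \<and> theta_path A (path_cat p q) = r then x p * y q else 0)"
      by (simp only: cnd_theta th_at)
    finally show ?thesis .
  qed
  show "theta A (pa_mult tgt x y) r = pa_mult St (theta A x) (theta A y) r"
  proof (cases "r \<in> range (theta_path A)")
    case True
    then obtain s where s: "r = theta_path A s" by blast
    have "theta A (pa_mult tgt x y) r = pa_mult tgt x y s" by (simp add: s th_at)
    also have "\<dots> = (\<Sum>p\<in>Sx. \<Sum>q\<in>Sy. if cnd tgt p q s then x p * y q else 0)"
      by (rule pa_mult_PQ) (use fx fy in \<open>auto simp: Sx_def Sy_def\<close>)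
    also have "\<dots> = (\<Sum>p\<in>Sx. \<Sum>q\<in>Sy. if path_end tgt p = fst q \<and> theta_path A (path_cat p q) = r then x p * y q else 0)"
      by (simp add: cnd_def s)
    finally show ?thesis using rhs by simp
  next
    case False
    then have "theta A (pa_mult tgt x y) r = 0" by (rule theta_out)
    moreover have "theta_path A (path_cat p q) \<noteq> r" for p q using False by auto
    ultimately show ?thesis using rhs by simp
  qed
qed

lemma th_one_at: "theta A (\<lambda>p. if snd p = [] \<and> fst p \<in> V then 1 else 0) q =
   (if snd q = [] \<and> fst q \<in> Inl ` V then (1::'k::field) else 0)"
proof (cases "q \<in> range (theta_path A)")
  case True
  then obtain p where "q = theta_path A p" by blast
  then show ?thesis by (auto simp: snd_theta_path)
next
  case False
  have "\<not> (snd q = [] \<and> fst q \<in> Inl ` V)"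
  proof
    assume "snd q = [] \<and> fst q \<in> Inl ` V"
    then obtain v where "q = (Inl v, [])" by (cases q) auto
    then have "q = theta_path A (v, [])" by (simp add: theta_path_blk)
    then show False using False by blast
  qed
  then show ?thesis using False by (simp add: theta_out)
qed

lemma th_one: "theta A (\<lambda>p. if snd p = [] \<and> fst p \<in> V then 1 else 0) =
   (\<lambda>q. if snd q = [] \<and> fst q \<in> Inl ` V then (1::'k::field) else 0)"
  by (rule ext) (rule th_one_at)

lemma pelem_carrier: "v \<in> V \<Longrightarrow> path_elem (Inl v, []) \<in> carrier (path_algebra SV SE Ss St :: (_ \<Rightarrow> 'k::field) ring)"
  by (simp add: S.carrier_PA path_elem_def)

lemma finsum_eps_aux:
  assumes "F \<subseteq> V"
  shows "finsum (path_algebra SV SE Ss St) (\<lambda>v. path_elem (Inl v, [])) F =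
     (\<lambda>q. if snd q = [] \<and> fst q \<in> Inl ` F then (1::'k::field) else 0)"
proof -
  interpret SR: ring "path_algebra SV SE Ss St :: (_ \<Rightarrow> 'k) ring" by (rule S.PA_ring)
  have "finite F" using assms finV finite_subset by blast
  then show ?thesis using assms
  proof (induction F rule: finite_induct)
    case empty
    then show ?case by simp
  next
    case (insert v F)
    have "finsum (path_algebra SV SE Ss St :: (_ \<Rightarrow> 'k) ring) (\<lambda>v. path_elem (Inl v, [])) (insert v F) =
       path_elem (Inl v, []) \<oplus>\<^bsub>path_algebra SV SE Ss St\<^esub> finsum (path_algebra SV SE Ss St) (\<lambda>v. path_elem (Inl v, [])) F"
      by (rule SR.finsum_insert) (use insert pelem_carrier in auto)
    also have "\<dots> = (\<lambda>q. (if q = (Inl v, []) then 1 else 0) + (if snd q = [] \<and> fst q \<in> Inl ` F then (1::'k) else 0))"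
      using insert by (simp add: path_elem_def)
    also have "\<dots> = (\<lambda>q. if snd q = [] \<and> fst q \<in> Inl ` (insert v F) then (1::'k) else 0)"
      using insert by (auto simp: fun_eq_iff prod_eq_iff)
    finally show ?case .
  qed
qed

lemma finsum_eps:
  "finsum (path_algebra SV SE Ss St) (\<lambda>v. path_elem (Inl v, [])) V =
     theta A (\<lambda>p. if snd p = [] \<and> fst p \<in> V then (1::'k::field) else 0)"
  by (simp add: finsum_eps_aux th_one)

definition pi :: "(('v + 'a \<times> nat) \<times> ('a \<times> nat) list \<Rightarrow> 'k) \<Rightarrow> ('v \<times> 'a list \<Rightarrow> 'k)" where
  "pi y = (\<lambda>p. y (theta_path A p))"

lemma pi_theta: "pi (theta A x) = x"
  by (simp add: pi_def th_at)

lemma corner: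
  assumes y: "y \<in> carrier (path_algebra SV SE Ss St)"
    and c: "\<And>r. y r \<noteq> 0 \<Longrightarrow> (\<exists>u. fst r = Inl u) \<and> (\<exists>w. path_end St r = Inl w)"
  shows "pi y \<in> carrier (path_algebra V E src tgt)" "theta A (pi y) = y"
proof -
  have yc: "finite {q. y q \<noteq> 0}" "\<And>q. y q \<noteq> 0 \<Longrightarrow> vp SV SE Ss St (fst q) (snd q)"
    using y by (auto simp: S.carrier_PA)
  have key: "\<exists>p. r = theta_path A p \<and> vp V E src tgt (fst p) (snd p)" if yr: "y r \<noteq> 0" for r
  proof -
    obtain u w where uw: "fst r = Inl u" "path_end St r = Inl w" using c[OF yr] by blast
    have "vp SV SE Ss St (Inl u) (snd r)" "path_end St (Inl u, snd r) = Inl w"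
      using yc(2)[OF yr] uw by (metis prod.collapse)+
    then obtain xs where "vp V E src tgt u xs" "snd r = concat (map (blk A) xs)"
      using unstretch by blast
    then show ?thesis using uw by (intro exI[of _ "(u, xs)"]) (auto simp: theta_path_blk prod_eq_iff)
  qed
  have inj: "inj (theta_path A)" by (rule theta_path_inj[OF A1])
  show "pi y \<in> carrier (path_algebra V E src tgt)"
    unfolding carrier_PA
  proof
    have "{p. pi y p \<noteq> 0} = theta_path A -` {q. y q \<noteq> 0}" by (auto simp: pi_def)
    moreover have "finite (theta_path A -` {q. y q \<noteq> 0})"
      using yc(1) inj by (intro finite_vimageI) (auto simp: inj_on_def dest: injD)
    ultimately show "finite {p. pi y p \<noteq> 0}" by simp
    show "\<forall>p. pi y p \<noteq> 0 \<longrightarrow> vp V E src tgt (fst p) (snd p)"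
    proof (intro allI impI)
      fix p assume "pi y p \<noteq> 0"
      then obtain p' where "theta_path A p = theta_path A p'" "vp V E src tgt (fst p') (snd p')"
        using key[of "theta_path A p"] by (auto simp: pi_def)
      then show "vp V E src tgt (fst p) (snd p)" using inj by (auto dest: injD)
    qed
  qed
  show "theta A (pi y) = y"
  proof
    fix q show "theta A (pi y) q = y q"
    proof (cases "q \<in> range (theta_path A)")
      case True
      then obtain p where "q = theta_path A p" by blast
      then show ?thesis by (simp add: th_at pi_def)
    next
      case False
      then have "y q = 0" using key by blast
      then show ?thesis using False by (simp add: theta_out)
    qed
  qed
qed

lemma eps_left:
  assumes "pa_mult St (theta A (\<lambda>p. if snd p = [] \<and> fst p \<in> V then (1::'k::field) else 0)) z r \<noteq> 0"
  shows "\<exists>u. fst r = Inl u"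
proof -
  obtain p q where "theta A (\<lambda>p. if snd p = [] \<and> fst p \<in> V then (1::'k) else 0) p \<noteq> 0" "cnd St p q r"
    using pa_mult_supp[OF assms] by blast
  then show ?thesis by (auto simp: th_one cnd_def path_cat_def split: if_splits)
qed

lemma eps_right:
  assumes "pa_mult St z (theta A (\<lambda>p. if snd p = [] \<and> fst p \<in> V then (1::'k::field) else 0)) r \<noteq> 0"
  shows "z r \<noteq> 0 \<and> (\<exists>w. path_end St r = Inl w)"
proof -
  obtain p q where pq: "z p \<noteq> 0" "theta A (\<lambda>p. if snd p = [] \<and> fst p \<in> V then (1::'k) else 0) q \<noteq> 0" "cnd St p q r"
    using pa_mult_supp[OF assms] by blast
  then have "snd q = []" "fst q \<in> Inl ` V" by (auto simp: th_one split: if_splits)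
  then have "r = p" "path_end St p = fst q" using pq(3) by (auto simp: cnd_def path_cat_def)
  then show ?thesis using pq(1) \<open>fst q \<in> Inl ` V\<close> by auto
qed

end


lemma Quot_carrier: "carrier (R Quot I) = {I +>\<^bsub>R\<^esub> x | x. x \<in> carrier R}"
  by (auto simp: FactRing_def A_RCOSETS_def'[of R])

lemma Quot_simps:
  "X \<otimes>\<^bsub>R Quot I\<^esub> Y = rcoset_mult R I X Y"
  "X \<oplus>\<^bsub>R Quot I\<^esub> Y = X <+>\<^bsub>R\<^esub> Y"
  "\<one>\<^bsub>R Quot I\<^esub> = I +>\<^bsub>R\<^esub> \<one>\<^bsub>R\<^esub>"
  by (simp_all add: FactRing_def)

lemma corner_simps:
  "carrier (corner_ring Q e) = {e \<otimes>\<^bsub>Q\<^esub> y \<otimes>\<^bsub>Q\<^esub> e | y. y \<in> carrier Q}"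
  "X \<otimes>\<^bsub>corner_ring Q e\<^esub> Y = X \<otimes>\<^bsub>Q\<^esub> Y"
  "X \<oplus>\<^bsub>corner_ring Q e\<^esub> Y = X \<oplus>\<^bsub>Q\<^esub> Y"
  "\<one>\<^bsub>corner_ring Q e\<^esub> = e"
  by (simp_all add: corner_ring_def)

lemma pa_mult_smult_left:
  assumes "finite {p. f p \<noteq> 0}" "finite {p. g p \<noteq> 0}"
  shows "pa_mult t (\<lambda>p. c * f p) g = (\<lambda>r. c * pa_mult t f g r)"
proof
  fix r
  have "pa_mult t (\<lambda>p. c * f p) g r = (\<Sum>p\<in>{p. f p \<noteq> 0}. \<Sum>q\<in>{p. g p \<noteq> 0}. if cnd t p q r then c * f p * g q else 0)"
    by (rule pa_mult_PQ) (use assms in auto)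
  also have "\<dots> = c * (\<Sum>p\<in>{p. f p \<noteq> 0}. \<Sum>q\<in>{p. g p \<noteq> 0}. if cnd t p q r then f p * g q else 0)"
    by (simp add: sum_distrib_left) (intro sum.cong refl, simp add: mult.assoc)
  also have "\<dots> = c * pa_mult t f g r"
    by (subst pa_mult_PQ[of "{p. f p \<noteq> 0}" "{p. g p \<noteq> 0}"]) (use assms in auto)
  finally show "pa_mult t (\<lambda>p. c * f p) g r = c * pa_mult t f g r" .
qed

context quiv
begin

lemma PA_neg:
  assumes "x \<in> carrier (path_algebra V E src tgt :: (_ \<Rightarrow> 'k::field) ring)"
  shows "\<ominus>\<^bsub>path_algebra V E src tgt\<^esub> x = (\<lambda>p. - x p)"
proof -
  interpret ring "path_algebra V E src tgt :: (_ \<Rightarrow> 'k) ring" by (rule PA_ring)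
  have "(\<lambda>p. - x p) \<in> carrier (path_algebra V E src tgt)" using assms by (simp add: carrier_PA)
  then show ?thesis using assms by (intro minus_equality) auto
qed

lemma PA_smult_carrier:
  assumes "x \<in> carrier (path_algebra V E src tgt :: (_ \<Rightarrow> 'k::field) ring)"
  shows "(\<lambda>p. c * x p) \<in> carrier (path_algebra V E src tgt)"
proof -
  have "{p. c * x p \<noteq> 0} \<subseteq> {p. x p \<noteq> 0}" by auto
  then show ?thesis using assms by (auto simp: carrier_PA intro: finite_subset)
qed

lemma PA_smult_one:
  assumes x: "x \<in> carrier (path_algebra V E src tgt :: (_ \<Rightarrow> 'k::field) ring)"
  shows "(\<lambda>p. c * \<one>\<^bsub>path_algebra V E src tgt\<^esub> p) \<otimes>\<^bsub>path_algebra V E src tgt\<^esub> x = (\<lambda>p. c * x p)"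
proof -
  let ?R = "path_algebra V E src tgt :: (_ \<Rightarrow> 'k) ring"
  interpret ring "path_algebra V E src tgt :: (_ \<Rightarrow> 'k) ring" by (rule PA_ring)
  have o: "\<one>\<^bsub>?R\<^esub> \<in> carrier (?R)" by (rule one_closed)
  have "pa_mult tgt (\<lambda>p. c * \<one>\<^bsub>?R\<^esub> p) x = (\<lambda>r. c * pa_mult tgt (\<one>\<^bsub>?R\<^esub>) x r)"
    using o x by (intro pa_mult_smult_left) (simp_all only: carrier_PA)
  also have "\<dots> = (\<lambda>r. c * x r)" using l_one[OF x] by simp
  finally show ?thesis by simp
qed

lemma PA_ideal_smult:
  assumes "ideal I (path_algebra V E src tgt :: (_ \<Rightarrow> 'k::field) ring)" and "x \<in> I"
  shows "(\<lambda>p. c * x p) \<in> I"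
proof -
  let ?R = "path_algebra V E src tgt :: (_ \<Rightarrow> 'k) ring"
  interpret ideal I "path_algebra V E src tgt :: (_ \<Rightarrow> 'k) ring" by fact
  have x: "x \<in> carrier (?R)" using assms(2) a_Hcarr by blast
  have "(\<lambda>p. c * \<one>\<^bsub>?R\<^esub> p) \<in> carrier (?R)"
    by (rule PA_smult_carrier) (rule ring.ring_simprules(6)[OF PA_ring])
  then have "(\<lambda>p. c * \<one>\<^bsub>?R\<^esub> p) \<otimes>\<^bsub>?R\<^esub> x \<in> I"
    using assms(2) by (rule I_l_closed[rotated])
  then show ?thesis using PA_smult_one[OF x] by simp
qed

end


context stretch
begin

lemma main:
  fixes G :: "('v \<times> 'a list \<Rightarrow> 'k::field) set"
  assumes Gcar: "G \<subseteq> carrier (path_algebra V E src tgt)"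
    and Gunif: "\<forall>g\<in>G. uniform_elem V E src tgt g"
  defines "R \<equiv> path_algebra V E src tgt :: ('v \<times> 'a list \<Rightarrow> 'k) ring"
    and "S \<equiv> path_algebra SV SE Ss St :: (('v + 'a \<times> nat) \<times> ('a \<times> nat) list \<Rightarrow> 'k) ring"
  defines "I \<equiv> genideal R G"
    and "J \<equiv> genideal S (theta A ` G)"
    and "eps \<equiv> theta A \<one>\<^bsub>R\<^esub>"
  shows "\<exists>\<phi>. \<phi> \<in> ring_iso (R Quot I) (corner_ring (S Quot J) (J +>\<^bsub>S\<^esub> eps))
          \<and> (\<forall>c X. X \<in> carrier (R Quot I) \<longrightarrow>
               \<phi> (quot_smult R I c X) = quot_smult S J c (\<phi> X))"
proof -
  interpret RR: ring R unfolding R_def by (rule PA_ring)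
  interpret SS: ring S unfolding S_def by (rule S.PA_ring)
  have GcarR: "G \<subseteq> carrier R" using Gcar by (simp add: R_def)
  interpret I: ideal I R unfolding I_def by (rule RR.genideal_ideal[OF GcarR])
  have thc: "theta A x \<in> carrier S" if "x \<in> carrier R" for x
    using th_carrier that by (simp add: R_def S_def)
  have thG: "theta A ` G \<subseteq> carrier S" using thc GcarR by blast
  interpret J: ideal J S unfolding J_def by (rule SS.genideal_ideal[OF thG])
  have finR: "finite {p. x p \<noteq> 0}" if "x \<in> carrier R" for x
    using that by (simp add: R_def carrier_PA)
  have th_add': "theta A (x \<oplus>\<^bsub>R\<^esub> y) = theta A x \<oplus>\<^bsub>S\<^esub> theta A y" for x y
    by (simp add: R_def S_def th_add)
  have th_mult': "theta A (x \<otimes>\<^bsub>R\<^esub> y) = theta A x \<otimes>\<^bsub>S\<^esub> theta A y"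
    if "x \<in> carrier R" "y \<in> carrier R" for x y
    using th_mult[OF finR[OF that(1)] finR[OF that(2)]] by (simp add: R_def S_def)
  have th_neg': "theta A (\<ominus>\<^bsub>R\<^esub> x) = \<ominus>\<^bsub>S\<^esub> theta A x" if "x \<in> carrier R" for x
  proof -
    have "\<ominus>\<^bsub>R\<^esub> x = (\<lambda>p. - x p)" using PA_neg that by (simp add: R_def)
    moreover have "\<ominus>\<^bsub>S\<^esub> theta A x = (\<lambda>p. - theta A x p)" using S.PA_neg thc[OF that] by (simp add: S_def)
    ultimately show ?thesis by (simp add: th_neg)
  qed
  have th_zero': "theta A \<zero>\<^bsub>R\<^esub> = \<zero>\<^bsub>S\<^esub>" by (simp add: R_def S_def th_zero)
  have epsc: "eps \<in> carrier S" unfolding eps_def by (rule thc) simp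
  have sandwich: "eps \<otimes>\<^bsub>S\<^esub> theta A x \<otimes>\<^bsub>S\<^esub> eps = theta A x" if "x \<in> carrier R" for x
    using that by (simp add: eps_def th_mult'[symmetric])
  have epsl: "eps \<otimes>\<^bsub>S\<^esub> theta A x = theta A x" if "x \<in> carrier R" for x
    using that by (simp add: eps_def th_mult'[symmetric])
  have epsr: "theta A x \<otimes>\<^bsub>S\<^esub> eps = theta A x" if "x \<in> carrier R" for x
    using that by (simp add: eps_def th_mult'[symmetric])
  have pi_th: "pi (theta A x) = x" for x by (rule pi_theta)
  have pi_add: "pi (y \<oplus>\<^bsub>S\<^esub> z) = pi y \<oplus>\<^bsub>R\<^esub> pi z" for y z
    by (simp add: pi_def R_def S_def)
  define Cn where "Cn z \<longleftrightarrow> z \<in> carrier S \<and> pi z \<in> carrier R \<and> theta A (pi z) = z" for z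
  have cn_form: "Cn (eps \<otimes>\<^bsub>S\<^esub> w \<otimes>\<^bsub>S\<^esub> eps)" if w: "w \<in> carrier S" for w
  proof -
    let ?z = "eps \<otimes>\<^bsub>S\<^esub> w \<otimes>\<^bsub>S\<^esub> eps"
    have zc: "?z \<in> carrier S" using w epsc by simp
    have e: "eps = theta A (\<lambda>p. if snd p = [] \<and> fst p \<in> V then (1::'k) else 0)"
      by (simp add: eps_def R_def)
    have z: "?z = pa_mult St (pa_mult St eps w) eps" by (simp add: S_def)
    have cond: "(\<exists>u. fst r = Inl u) \<and> (\<exists>w'. path_end St r = Inl w')" if "?z r \<noteq> 0" for r
    proof -
      from that have "pa_mult St (pa_mult St eps w) eps r \<noteq> 0" using z by simp
      then have "pa_mult St eps w r \<noteq> 0 \<and> (\<exists>w'. path_end St r = Inl w')"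
        unfolding e by (rule eps_right)
      then show ?thesis unfolding e using eps_left by blast
    qed
    have "pi ?z \<in> carrier (path_algebra V E src tgt)" "theta A (pi ?z) = ?z"
      using corner[of ?z] zc cond by (auto simp: S_def)
    then show ?thesis using zc by (simp add: Cn_def R_def)
  qed
  have pi_neg: "pi (\<ominus>\<^bsub>S\<^esub> z) = \<ominus>\<^bsub>R\<^esub> pi z" if "Cn z" for z
  proof -
    have "\<ominus>\<^bsub>S\<^esub> z = (\<lambda>p. - z p)" using S.PA_neg[of z] that by (simp add: S_def Cn_def)
    moreover have "\<ominus>\<^bsub>R\<^esub> pi z = (\<lambda>p. - pi z p)" using PA_neg[of "pi z"] that by (simp add: R_def Cn_def)
    ultimately show ?thesis by (simp add: pi_def)
  qed
  have pi_zero: "pi \<zero>\<^bsub>S\<^esub> = \<zero>\<^bsub>R\<^esub>" by (simp add: pi_def R_def S_def)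
  have th_I: "theta A x \<in> J" if "x \<in> I" for x
  proof -
    define K where "K = {x \<in> carrier R. theta A x \<in> J}"
    have "ideal K R"
    proof (rule idealI[OF RR.ring_axioms])
      show "subgroup K (add_monoid R)"
      proof (rule RR.add.subgroupI)
        show "K \<subseteq> carrier R" by (auto simp: K_def)
        have "\<zero>\<^bsub>R\<^esub> \<in> K" by (simp add: K_def th_zero')
        then show "K \<noteq> {}" by blast
        show "\<ominus>\<^bsub>R\<^esub> a \<in> K" if "a \<in> K" for a
          using that by (auto simp: K_def th_neg')
        show "a \<oplus>\<^bsub>R\<^esub> b \<in> K" if "a \<in> K" "b \<in> K" for a b
          using that by (auto simp: K_def th_add')
      qed
      show "x \<otimes>\<^bsub>R\<^esub> a \<in> K" if "a \<in> K" "x \<in> carrier R" for a x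
        using that by (auto simp: K_def th_mult' thc J.I_l_closed)
      show "a \<otimes>\<^bsub>R\<^esub> x \<in> K" if "a \<in> K" "x \<in> carrier R" for a x
        using that by (auto simp: K_def th_mult' thc J.I_r_closed)
    qed
    moreover have "G \<subseteq> K"
      using GcarR SS.genideal_self[OF thG] by (auto simp: K_def J_def)
    ultimately have "I \<subseteq> K" unfolding I_def by (rule RR.genideal_minimal)
    then show ?thesis using that by (auto simp: K_def)
  qed
  have J_I: "x \<in> I" if x: "x \<in> carrier R" and tx: "theta A x \<in> J" for x
  proof -
    define J' where "J' = {y \<in> carrier S. \<forall>a\<in>carrier S. \<forall>b\<in>carrier S.
        pi (eps \<otimes>\<^bsub>S\<^esub> (a \<otimes>\<^bsub>S\<^esub> y \<otimes>\<^bsub>S\<^esub> b) \<otimes>\<^bsub>S\<^esub> eps) \<in> I}"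
    have "ideal J' S"
    proof (rule idealI[OF SS.ring_axioms])
      show "subgroup J' (add_monoid S)"
      proof (rule SS.add.subgroupI)
        show "J' \<subseteq> carrier S" by (auto simp: J'_def)
        have "\<zero>\<^bsub>S\<^esub> \<in> J'" using epsc by (simp add: J'_def pi_zero)
        then show "J' \<noteq> {}" by blast
        show "\<ominus>\<^bsub>S\<^esub> y \<in> J'" if y: "y \<in> J'" for y
        proof -
          have yc: "y \<in> carrier S" using y by (simp add: J'_def)
          have "pi (eps \<otimes>\<^bsub>S\<^esub> (a \<otimes>\<^bsub>S\<^esub> \<ominus>\<^bsub>S\<^esub> y \<otimes>\<^bsub>S\<^esub> b) \<otimes>\<^bsub>S\<^esub> eps) \<in> I"
            if a: "a \<in> carrier S" and b: "b \<in> carrier S" for a b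
          proof -
            let ?z = "eps \<otimes>\<^bsub>S\<^esub> (a \<otimes>\<^bsub>S\<^esub> y \<otimes>\<^bsub>S\<^esub> b) \<otimes>\<^bsub>S\<^esub> eps"
            have "eps \<otimes>\<^bsub>S\<^esub> (a \<otimes>\<^bsub>S\<^esub> \<ominus>\<^bsub>S\<^esub> y \<otimes>\<^bsub>S\<^esub> b) \<otimes>\<^bsub>S\<^esub> eps = \<ominus>\<^bsub>S\<^esub> ?z"
              using a b yc epsc by (simp add: SS.l_minus SS.r_minus)
            moreover have "Cn ?z" using a b yc epsc by (intro cn_form) simp
            moreover have "pi ?z \<in> I" using y a b by (simp add: J'_def)
            ultimately show ?thesis using pi_neg by simp
          qed
          then show ?thesis using yc by (simp add: J'_def)
        qed
        show "y1 \<oplus>\<^bsub>S\<^esub> y2 \<in> J'" if y1: "y1 \<in> J'" and y2: "y2 \<in> J'" for y1 y2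
        proof -
          have yc: "y1 \<in> carrier S" "y2 \<in> carrier S" using y1 y2 by (simp_all add: J'_def)
          have "pi (eps \<otimes>\<^bsub>S\<^esub> (a \<otimes>\<^bsub>S\<^esub> (y1 \<oplus>\<^bsub>S\<^esub> y2) \<otimes>\<^bsub>S\<^esub> b) \<otimes>\<^bsub>S\<^esub> eps) \<in> I"
            if a: "a \<in> carrier S" and b: "b \<in> carrier S" for a b
          proof -
            have "eps \<otimes>\<^bsub>S\<^esub> (a \<otimes>\<^bsub>S\<^esub> (y1 \<oplus>\<^bsub>S\<^esub> y2) \<otimes>\<^bsub>S\<^esub> b) \<otimes>\<^bsub>S\<^esub> eps =
                eps \<otimes>\<^bsub>S\<^esub> (a \<otimes>\<^bsub>S\<^esub> y1 \<otimes>\<^bsub>S\<^esub> b) \<otimes>\<^bsub>S\<^esub> eps \<oplus>\<^bsub>S\<^esub> eps \<otimes>\<^bsub>S\<^esub> (a \<otimes>\<^bsub>S\<^esub> y2 \<otimes>\<^bsub>S\<^esub> b) \<otimes>\<^bsub>S\<^esub> eps"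
              using a b yc epsc by (simp add: SS.l_distr SS.r_distr)
            moreover have "pi (eps \<otimes>\<^bsub>S\<^esub> (a \<otimes>\<^bsub>S\<^esub> y1 \<otimes>\<^bsub>S\<^esub> b) \<otimes>\<^bsub>S\<^esub> eps) \<in> I"
              "pi (eps \<otimes>\<^bsub>S\<^esub> (a \<otimes>\<^bsub>S\<^esub> y2 \<otimes>\<^bsub>S\<^esub> b) \<otimes>\<^bsub>S\<^esub> eps) \<in> I"
              using y1 y2 a b by (simp_all add: J'_def)
            ultimately show ?thesis by (simp add: pi_add)
          qed
          then show ?thesis using yc by (simp add: J'_def)
        qed
      qed
      show "x \<otimes>\<^bsub>S\<^esub> y \<in> J'" if y: "y \<in> J'" and x: "x \<in> carrier S" for y x
      proof -
        have yc: "y \<in> carrier S" using y by (simp add: J'_def)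
        have "pi (eps \<otimes>\<^bsub>S\<^esub> (a \<otimes>\<^bsub>S\<^esub> (x \<otimes>\<^bsub>S\<^esub> y) \<otimes>\<^bsub>S\<^esub> b) \<otimes>\<^bsub>S\<^esub> eps) \<in> I"
          if a: "a \<in> carrier S" and b: "b \<in> carrier S" for a b
        proof -
          have "a \<otimes>\<^bsub>S\<^esub> (x \<otimes>\<^bsub>S\<^esub> y) \<otimes>\<^bsub>S\<^esub> b = (a \<otimes>\<^bsub>S\<^esub> x) \<otimes>\<^bsub>S\<^esub> y \<otimes>\<^bsub>S\<^esub> b"
            using a b x yc by (simp add: SS.m_assoc)
          moreover have "pi (eps \<otimes>\<^bsub>S\<^esub> ((a \<otimes>\<^bsub>S\<^esub> x) \<otimes>\<^bsub>S\<^esub> y \<otimes>\<^bsub>S\<^esub> b) \<otimes>\<^bsub>S\<^esub> eps) \<in> I"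
            using y a b x by (simp add: J'_def)
          ultimately show ?thesis by simp
        qed
        then show ?thesis using yc x by (simp add: J'_def)
      qed
      show "y \<otimes>\<^bsub>S\<^esub> x \<in> J'" if y: "y \<in> J'" and x: "x \<in> carrier S" for y x
      proof -
        have yc: "y \<in> carrier S" using y by (simp add: J'_def)
        have "pi (eps \<otimes>\<^bsub>S\<^esub> (a \<otimes>\<^bsub>S\<^esub> (y \<otimes>\<^bsub>S\<^esub> x) \<otimes>\<^bsub>S\<^esub> b) \<otimes>\<^bsub>S\<^esub> eps) \<in> I"
          if a: "a \<in> carrier S" and b: "b \<in> carrier S" for a b
        proof -
          have "a \<otimes>\<^bsub>S\<^esub> (y \<otimes>\<^bsub>S\<^esub> x) \<otimes>\<^bsub>S\<^esub> b = a \<otimes>\<^bsub>S\<^esub> y \<otimes>\<^bsub>S\<^esub> (x \<otimes>\<^bsub>S\<^esub> b)"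
            using a b x yc by (simp add: SS.m_assoc)
          moreover have "pi (eps \<otimes>\<^bsub>S\<^esub> (a \<otimes>\<^bsub>S\<^esub> y \<otimes>\<^bsub>S\<^esub> (x \<otimes>\<^bsub>S\<^esub> b)) \<otimes>\<^bsub>S\<^esub> eps) \<in> I"
            using y a b x by (simp add: J'_def)
          ultimately show ?thesis by simp
        qed
        then show ?thesis using yc x by (simp add: J'_def)
      qed
    qed
    moreover have "theta A ` G \<subseteq> J'"
    proof
      fix z assume "z \<in> theta A ` G"
      then obtain g where g: "g \<in> G" "z = theta A g" by blast
      have gc: "g \<in> carrier R" using g GcarR by blast
      have gI: "g \<in> I" using g RR.genideal_self[OF GcarR] by (auto simp: I_def)
      obtain v v' where vv: "v \<in> V" "v' \<in> V"
        "g = pa_mult tgt (path_elem (v, [])) g" "g = pa_mult tgt g (path_elem (v', []))"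
        using Gunif g unfolding uniform_elem_def by blast
      have evc: "path_elem (v, []) \<in> carrier R" "path_elem (v', []) \<in> carrier R"
        using vv by (auto simp: R_def carrier_PA path_elem_def)
      let ?ev = "path_elem (v, []) :: 'v \<times> 'a list \<Rightarrow> 'k"
      let ?ev' = "path_elem (v', []) :: 'v \<times> 'a list \<Rightarrow> 'k"
      have g_eq: "theta A g = theta A ?ev \<otimes>\<^bsub>S\<^esub> theta A g \<otimes>\<^bsub>S\<^esub> theta A ?ev'"
      proof -
        have "g = ?ev \<otimes>\<^bsub>R\<^esub> g \<otimes>\<^bsub>R\<^esub> ?ev'" using vv by (simp add: R_def)
        then have "theta A g = theta A (?ev \<otimes>\<^bsub>R\<^esub> g \<otimes>\<^bsub>R\<^esub> ?ev')" by simp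
        also have "\<dots> = theta A ?ev \<otimes>\<^bsub>S\<^esub> theta A g \<otimes>\<^bsub>S\<^esub> theta A ?ev'"
          using evc gc by (simp add: th_mult')
        finally show ?thesis .
      qed
      have "pi (eps \<otimes>\<^bsub>S\<^esub> (a \<otimes>\<^bsub>S\<^esub> z \<otimes>\<^bsub>S\<^esub> b) \<otimes>\<^bsub>S\<^esub> eps) \<in> I"
        if a: "a \<in> carrier S" and b: "b \<in> carrier S" for a b
      proof -
        let ?L = "eps \<otimes>\<^bsub>S\<^esub> a \<otimes>\<^bsub>S\<^esub> theta A ?ev"
        let ?Rz = "theta A ?ev' \<otimes>\<^bsub>S\<^esub> b \<otimes>\<^bsub>S\<^esub> eps"
        have tev: "theta A ?ev \<in> carrier S" "theta A ?ev' \<in> carrier S" using evc thc by auto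
        have tg: "theta A g \<in> carrier S" using gc thc by auto
        have L_eq: "?L = eps \<otimes>\<^bsub>S\<^esub> (a \<otimes>\<^bsub>S\<^esub> theta A ?ev) \<otimes>\<^bsub>S\<^esub> eps"
          using a tev epsc epsr[OF evc(1)] by (simp add: SS.m_assoc)
        have R_eq: "?Rz = eps \<otimes>\<^bsub>S\<^esub> (theta A ?ev' \<otimes>\<^bsub>S\<^esub> b) \<otimes>\<^bsub>S\<^esub> eps"
        proof -
          have "eps \<otimes>\<^bsub>S\<^esub> (theta A ?ev' \<otimes>\<^bsub>S\<^esub> b) \<otimes>\<^bsub>S\<^esub> eps = (eps \<otimes>\<^bsub>S\<^esub> theta A ?ev') \<otimes>\<^bsub>S\<^esub> b \<otimes>\<^bsub>S\<^esub> eps"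
            using b tev epsc by (simp add: SS.m_assoc)
          then show ?thesis unfolding epsl[OF evc(2)] by simp
        qed
        have cL: "Cn ?L" unfolding L_eq using a tev by (intro cn_form) simp
        have cR: "Cn ?Rz" unfolding R_eq using b tev by (intro cn_form) simp
        have "eps \<otimes>\<^bsub>S\<^esub> (a \<otimes>\<^bsub>S\<^esub> z \<otimes>\<^bsub>S\<^esub> b) \<otimes>\<^bsub>S\<^esub> eps = ?L \<otimes>\<^bsub>S\<^esub> theta A g \<otimes>\<^bsub>S\<^esub> ?Rz"
          unfolding g(2) using a b tev tg epsc by (subst g_eq) (simp add: SS.m_assoc)
        also have "\<dots> = theta A (pi ?L) \<otimes>\<^bsub>S\<^esub> theta A g \<otimes>\<^bsub>S\<^esub> theta A (pi ?Rz)"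
          using cL cR by (simp add: Cn_def)
        also have "\<dots> = theta A (pi ?L \<otimes>\<^bsub>R\<^esub> g \<otimes>\<^bsub>R\<^esub> pi ?Rz)"
          using cL cR gc by (simp add: Cn_def th_mult')
        finally have "pi (eps \<otimes>\<^bsub>S\<^esub> (a \<otimes>\<^bsub>S\<^esub> z \<otimes>\<^bsub>S\<^esub> b) \<otimes>\<^bsub>S\<^esub> eps) = pi ?L \<otimes>\<^bsub>R\<^esub> g \<otimes>\<^bsub>R\<^esub> pi ?Rz"
          by (simp add: pi_th)
        also have "\<dots> \<in> I" using cL cR gI by (simp add: Cn_def I.I_l_closed I.I_r_closed)
        finally show ?thesis .
      qed
      then show "z \<in> J'" using g gc thc by (simp add: J'_def)
    qed
    ultimately have "J \<subseteq> J'" unfolding J_def by (rule SS.genideal_minimal)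
    then have "pi (eps \<otimes>\<^bsub>S\<^esub> (\<one>\<^bsub>S\<^esub> \<otimes>\<^bsub>S\<^esub> theta A x \<otimes>\<^bsub>S\<^esub> \<one>\<^bsub>S\<^esub>) \<otimes>\<^bsub>S\<^esub> eps) \<in> I"
      using tx unfolding J'_def by blast
    then show ?thesis using thc[OF x] sandwich[OF x] by (simp add: pi_th)
  qed
  have QR_mult: "(I +>\<^bsub>R\<^esub> x) \<otimes>\<^bsub>R Quot I\<^esub> (I +>\<^bsub>R\<^esub> y) = I +>\<^bsub>R\<^esub> (x \<otimes>\<^bsub>R\<^esub> y)"
    if "x \<in> carrier R" "y \<in> carrier R" for x y
    using I.rcoset_mult_add[OF that] by (simp add: Quot_simps)
  have QR_add: "(I +>\<^bsub>R\<^esub> x) \<oplus>\<^bsub>R Quot I\<^esub> (I +>\<^bsub>R\<^esub> y) = I +>\<^bsub>R\<^esub> (x \<oplus>\<^bsub>R\<^esub> y)"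
    if "x \<in> carrier R" "y \<in> carrier R" for x y
    using I.a_rcos_sum[OF that] by (simp add: Quot_simps)
  have QS_mult: "(J +>\<^bsub>S\<^esub> x) \<otimes>\<^bsub>S Quot J\<^esub> (J +>\<^bsub>S\<^esub> y) = J +>\<^bsub>S\<^esub> (x \<otimes>\<^bsub>S\<^esub> y)"
    if "x \<in> carrier S" "y \<in> carrier S" for x y
    using J.rcoset_mult_add[OF that] by (simp add: Quot_simps)
  have QS_add: "(J +>\<^bsub>S\<^esub> x) \<oplus>\<^bsub>S Quot J\<^esub> (J +>\<^bsub>S\<^esub> y) = J +>\<^bsub>S\<^esub> (x \<oplus>\<^bsub>S\<^esub> y)"
    if "x \<in> carrier S" "y \<in> carrier S" for x y
    using J.a_rcos_sum[OF that] by (simp add: Quot_simps)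
  define Ee where "Ee = J +>\<^bsub>S\<^esub> eps"
  have corner_car: "carrier (corner_ring (S Quot J) Ee) = {J +>\<^bsub>S\<^esub> (eps \<otimes>\<^bsub>S\<^esub> y \<otimes>\<^bsub>S\<^esub> eps) | y. y \<in> carrier S}"
  proof -
    have "Ee \<otimes>\<^bsub>S Quot J\<^esub> (J +>\<^bsub>S\<^esub> y) \<otimes>\<^bsub>S Quot J\<^esub> Ee = J +>\<^bsub>S\<^esub> (eps \<otimes>\<^bsub>S\<^esub> y \<otimes>\<^bsub>S\<^esub> eps)"
      if "y \<in> carrier S" for y
      using that epsc by (simp add: Ee_def QS_mult)
    then show ?thesis unfolding corner_simps Quot_carrier by blast
  qed
  define phi where "phi = (\<lambda>X. J +>\<^bsub>S\<^esub> theta A (SOME x. x \<in> X))"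
  have rep: "(SOME x0. x0 \<in> I +>\<^bsub>R\<^esub> x) \<in> I +>\<^bsub>R\<^esub> x" if x: "x \<in> carrier R" for x
    using I.a_rcos_self[OF x] by (rule someI[where P="\<lambda>z. z \<in> I +>\<^bsub>R\<^esub> x"])
  have phi_eq: "phi (I +>\<^bsub>R\<^esub> x) = J +>\<^bsub>S\<^esub> theta A x" if x: "x \<in> carrier R" for x
  proof -
    define x0 where "x0 = (SOME x0. x0 \<in> I +>\<^bsub>R\<^esub> x)"
    have x0: "x0 \<in> I +>\<^bsub>R\<^esub> x" unfolding x0_def using rep[OF x] .
    have x0c: "x0 \<in> carrier R" using I.a_elemrcos_carrier[OF x x0] .
    have "x0 \<oplus>\<^bsub>R\<^esub> \<ominus>\<^bsub>R\<^esub> x \<in> I" using I.a_rcos_module_imp[OF x x0] .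
    then have "theta A (x0 \<oplus>\<^bsub>R\<^esub> \<ominus>\<^bsub>R\<^esub> x) \<in> J" by (rule th_I)
    then have "theta A x0 \<oplus>\<^bsub>S\<^esub> \<ominus>\<^bsub>S\<^esub> theta A x \<in> J" using x by (simp add: th_add' th_neg')
    then have "theta A x0 \<in> J +>\<^bsub>S\<^esub> theta A x" using J.a_rcos_module_rev thc x0c x by blast
    then have "J +>\<^bsub>S\<^esub> theta A x = J +>\<^bsub>S\<^esub> theta A x0" using J.a_repr_independence' thc[OF x] by blast
    then show ?thesis by (simp add: phi_def x0_def)
  qed
  have QRcar: "X \<in> carrier (R Quot I) \<longleftrightarrow> (\<exists>x\<in>carrier R. X = I +>\<^bsub>R\<^esub> x)" for X
    by (auto simp: Quot_carrier)
  have iso: "phi \<in> ring_iso (R Quot I) (corner_ring (S Quot J) Ee)"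
  proof (rule ring_iso_memI)
    fix X assume "X \<in> carrier (R Quot I)"
    then obtain x where x: "x \<in> carrier R" "X = I +>\<^bsub>R\<^esub> x" by (auto simp: QRcar)
    have "phi X = J +>\<^bsub>S\<^esub> (eps \<otimes>\<^bsub>S\<^esub> theta A x \<otimes>\<^bsub>S\<^esub> eps)"
      using x by (simp add: phi_eq sandwich)
    then show "phi X \<in> carrier (corner_ring (S Quot J) Ee)"
      unfolding corner_car using thc[OF x(1)] by blast
  next
    fix X Y assume "X \<in> carrier (R Quot I)" "Y \<in> carrier (R Quot I)"
    then obtain x y where x: "x \<in> carrier R" "X = I +>\<^bsub>R\<^esub> x" and y: "y \<in> carrier R" "Y = I +>\<^bsub>R\<^esub> y"
      by (auto simp: QRcar)
    show "phi (X \<otimes>\<^bsub>R Quot I\<^esub> Y) = phi X \<otimes>\<^bsub>corner_ring (S Quot J) Ee\<^esub> phi Y"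
      using x y thc by (simp add: QR_mult phi_eq th_mult' corner_simps QS_mult)
    show "phi (X \<oplus>\<^bsub>R Quot I\<^esub> Y) = phi X \<oplus>\<^bsub>corner_ring (S Quot J) Ee\<^esub> phi Y"
      using x y thc by (simp add: QR_add phi_eq th_add' corner_simps QS_add)
  next
    show "phi \<one>\<^bsub>R Quot I\<^esub> = \<one>\<^bsub>corner_ring (S Quot J) Ee\<^esub>"
      by (simp add: Quot_simps corner_simps phi_eq Ee_def eps_def)
  next
    show "bij_betw phi (carrier (R Quot I)) (carrier (corner_ring (S Quot J) Ee))"
      unfolding bij_betw_def
    proof
      show "inj_on phi (carrier (R Quot I))"
      proof (rule inj_onI)
        fix X Y assume "X \<in> carrier (R Quot I)" "Y \<in> carrier (R Quot I)" and eq: "phi X = phi Y"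
        then obtain x y where x: "x \<in> carrier R" "X = I +>\<^bsub>R\<^esub> x" and y: "y \<in> carrier R" "Y = I +>\<^bsub>R\<^esub> y"
          by (auto simp: QRcar)
        have "J +>\<^bsub>S\<^esub> theta A x = J +>\<^bsub>S\<^esub> theta A y" using eq x y by (simp add: phi_eq)
        then have "theta A y \<in> J +>\<^bsub>S\<^esub> theta A x" using J.a_repr_independenceD thc[OF y(1)] by blast
        then have "theta A y \<oplus>\<^bsub>S\<^esub> \<ominus>\<^bsub>S\<^esub> theta A x \<in> J" using J.a_rcos_module_imp thc[OF x(1)] by blast
        then have "theta A (y \<oplus>\<^bsub>R\<^esub> \<ominus>\<^bsub>R\<^esub> x) \<in> J" using x y by (simp add: th_add' th_neg')
        then have "y \<oplus>\<^bsub>R\<^esub> \<ominus>\<^bsub>R\<^esub> x \<in> I" using x y by (intro J_I) auto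
        then have "y \<in> I +>\<^bsub>R\<^esub> x" using I.a_rcos_module_rev x y by blast
        then have "I +>\<^bsub>R\<^esub> x = I +>\<^bsub>R\<^esub> y" using I.a_repr_independence' x by blast
        then show "X = Y" using x y by simp
      qed
      show "phi ` carrier (R Quot I) = carrier (corner_ring (S Quot J) Ee)"
      proof
        show "phi ` carrier (R Quot I) \<subseteq> carrier (corner_ring (S Quot J) Ee)"
        proof
          fix Z assume "Z \<in> phi ` carrier (R Quot I)"
          then obtain x where x: "x \<in> carrier R" "Z = phi (I +>\<^bsub>R\<^esub> x)" by (auto simp: QRcar)
          have "Z = J +>\<^bsub>S\<^esub> (eps \<otimes>\<^bsub>S\<^esub> theta A x \<otimes>\<^bsub>S\<^esub> eps)"
            using x by (simp add: phi_eq sandwich)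
          then show "Z \<in> carrier (corner_ring (S Quot J) Ee)"
            unfolding corner_car using thc[OF x(1)] by blast
        qed
        show "carrier (corner_ring (S Quot J) Ee) \<subseteq> phi ` carrier (R Quot I)"
        proof
          fix Z assume "Z \<in> carrier (corner_ring (S Quot J) Ee)"
          then obtain y where y: "y \<in> carrier S" "Z = J +>\<^bsub>S\<^esub> (eps \<otimes>\<^bsub>S\<^esub> y \<otimes>\<^bsub>S\<^esub> eps)"
            unfolding corner_car by blast
          have c: "Cn (eps \<otimes>\<^bsub>S\<^esub> y \<otimes>\<^bsub>S\<^esub> eps)" using cn_form[OF y(1)] .
          let ?w = "pi (eps \<otimes>\<^bsub>S\<^esub> y \<otimes>\<^bsub>S\<^esub> eps)"
          have "Z = phi (I +>\<^bsub>R\<^esub> ?w)" using c y by (simp add: Cn_def phi_eq)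
          moreover have "I +>\<^bsub>R\<^esub> ?w \<in> carrier (R Quot I)" using c by (auto simp: Cn_def QRcar)
          ultimately show "Z \<in> phi ` carrier (R Quot I)" by blast
        qed
      qed
    qed
  qed
  have smult: "phi (quot_smult R I c X) = quot_smult S J c (phi X)"
    if X: "X \<in> carrier (R Quot I)" for c X
  proof -
    obtain x where x: "x \<in> carrier R" "X = I +>\<^bsub>R\<^esub> x" using X by (auto simp: QRcar)
    define x0 where "x0 = (SOME x. x \<in> X)"
    have x0X: "x0 \<in> X" unfolding x0_def x(2) using rep[OF x(1)] .
    have x0c: "x0 \<in> carrier R" using I.a_elemrcos_carrier[OF x(1)] x0X x(2) by blast
    have cx0c: "(\<lambda>p. c * x0 p) \<in> carrier R" using PA_smult_carrier[of x0 c] x0c by (simp add: R_def)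
    have lhs: "phi (quot_smult R I c X) = J +>\<^bsub>S\<^esub> (\<lambda>q. c * theta A x0 q)"
      using cx0c by (simp add: quot_smult_def x0_def[symmetric] phi_eq th_smult)
    have phX: "phi X = J +>\<^bsub>S\<^esub> theta A x0" by (simp add: phi_def x0_def)
    define y0 where "y0 = (SOME y. y \<in> J +>\<^bsub>S\<^esub> theta A x0)"
    have tx0: "theta A x0 \<in> carrier S" using thc[OF x0c] .
    have y0: "y0 \<in> J +>\<^bsub>S\<^esub> theta A x0" unfolding y0_def using J.a_rcos_self[OF tx0] by (rule someI[where P="\<lambda>z. z \<in> J +>\<^bsub>S\<^esub> theta A x0"])
    have y0c: "y0 \<in> carrier S" using J.a_elemrcos_carrier[OF tx0 y0] .
    have rhs: "quot_smult S J c (phi X) = J +>\<^bsub>S\<^esub> (\<lambda>q. c * y0 q)"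
      by (simp add: quot_smult_def phX y0_def)
    have d: "y0 \<oplus>\<^bsub>S\<^esub> \<ominus>\<^bsub>S\<^esub> theta A x0 \<in> J" using J.a_rcos_module_imp[OF tx0 y0] .
    have nS: "\<ominus>\<^bsub>S\<^esub> z = (\<lambda>p. - z p)" if "z \<in> carrier S" for z
      using S.PA_neg[of z] that by (simp add: S_def)
    have scS: "(\<lambda>p. c * z p) \<in> carrier S" if "z \<in> carrier S" for z
      using S.PA_smult_carrier[of z c] that by (simp add: S_def)
    have "(\<lambda>p. c * (y0 \<oplus>\<^bsub>S\<^esub> \<ominus>\<^bsub>S\<^esub> theta A x0) p) \<in> J"
      using S.PA_ideal_smult[of J _ c] J.is_ideal d by (simp add: S_def)
    moreover have "(\<lambda>p. c * (y0 \<oplus>\<^bsub>S\<^esub> \<ominus>\<^bsub>S\<^esub> theta A x0) p) =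
        (\<lambda>q. c * y0 q) \<oplus>\<^bsub>S\<^esub> \<ominus>\<^bsub>S\<^esub> (\<lambda>q. c * theta A x0 q)"
      unfolding nS[OF tx0] nS[OF scS[OF tx0]] by (simp add: S_def algebra_simps)
    ultimately have "(\<lambda>q. c * y0 q) \<in> J +>\<^bsub>S\<^esub> (\<lambda>q. c * theta A x0 q)"
      using J.a_rcos_module_rev scS tx0 y0c by metis
    then have "J +>\<^bsub>S\<^esub> (\<lambda>q. c * theta A x0 q) = J +>\<^bsub>S\<^esub> (\<lambda>q. c * y0 q)"
      using J.a_repr_independence' scS[OF tx0] by blast
    then show ?thesis using lhs rhs by simp
  qed
  show ?thesis
    using iso smult unfolding Ee_def by blast
qed

end

theorem theorem1p9:
  fixes V :: "'v set" and E :: "'a set" and src tgt :: "'a \<Rightarrow> 'v"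
    and G :: "('v \<times> 'a list \<Rightarrow> 'k::field) set" and A :: nat
  assumes finV: "finite V" and finE: "finite E"
    and arrows: "\<forall>\<alpha>\<in>E. src \<alpha> \<in> V \<and> tgt \<alpha> \<in> V"
    and Gcar: "G \<subseteq> carrier (path_algebra V E src tgt)"
    and finG: "finite G"
    and Gunif: "\<forall>g\<in>G. uniform_elem V E src tgt g"
    and adm: "admissible_ideal V E src tgt (genideal (path_algebra V E src tgt) G)"
    and Gmin: "\<forall>H. H \<subset> G \<longrightarrow>
                 genideal (path_algebra V E src tgt) H \<noteq> genideal (path_algebra V E src tgt) G"
    and A: "A \<ge> 1"
  shows "\<exists>\<phi>. \<phi> \<in> ring_iso
            (path_algebra V E src tgt Quot genideal (path_algebra V E src tgt) G)
            (corner_ring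
               (stretched_path_algebra A V E src tgt Quot stretched_ideal A V E src tgt G)
               (stretched_ideal A V E src tgt G
                  +>\<^bsub>stretched_path_algebra A V E src tgt\<^esub>
                  (finsum (stretched_path_algebra A V E src tgt) (\<lambda>v. path_elem (Inl v, [])) V)))
          \<and> (\<forall>c X. X \<in> carrier (path_algebra V E src tgt Quot genideal (path_algebra V E src tgt) G) \<longrightarrow>
               \<phi> (quot_smult (path_algebra V E src tgt) (genideal (path_algebra V E src tgt) G) c X)
               = quot_smult (stretched_path_algebra A V E src tgt) (stretched_ideal A V E src tgt G) c (\<phi> X))"
proof -
  interpret stretch V E src tgt A
    by (intro stretch.intro quiv.intro stretch_axioms.intro) (use finV arrows finE A in auto)
  have m: "\<exists>\<phi>. \<phi> \<in> ring_iso
            (path_algebra V E src tgt Quot genideal (path_algebra V E src tgt) G)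
            (corner_ring
               (path_algebra SV SE Ss St Quot genideal (path_algebra SV SE Ss St) (theta A ` G))
               (genideal (path_algebra SV SE Ss St) (theta A ` G)
                  +>\<^bsub>path_algebra SV SE Ss St\<^esub> theta A \<one>\<^bsub>path_algebra V E src tgt\<^esub>))
          \<and> (\<forall>c X. X \<in> carrier (path_algebra V E src tgt Quot genideal (path_algebra V E src tgt) G) \<longrightarrow>
               \<phi> (quot_smult (path_algebra V E src tgt) (genideal (path_algebra V E src tgt) G) c X)
               = quot_smult (path_algebra SV SE Ss St) (genideal (path_algebra SV SE Ss St) (theta A ` G)) c (\<phi> X))"
    by (rule main[OF Gcar Gunif])
  have f: "finsum (path_algebra SV SE Ss St) (\<lambda>v. path_elem (Inl v, [])) V = theta A \<one>\<^bsub>path_algebra V E src tgt\<^esub>"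
    by (simp add: finsum_eps)
  show ?thesis
    unfolding stretched_ideal_def stretched_def' f by (rule m)
qed

end
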